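(* For every $U\in\mathcal U_n$ there is exactly one sequence $w$ which is the area sequence of a Dyck path of length $n$ and such that $P(w)$ is isomorphic to $U$ as a poset; moreover this sequence equals $q(U)$.
   Context: A unit interval order on $\{1,\dots,n\}$ is a relation $\prec$ such that there are closed intervals $I_1,\dots,I_n$ of length $1$ in $\mathbb R$, numbered from left to right, with $i\prec j$ iff $I_i$ lies strictly to the left of $I_j$; $\mathcal U_n$ is the set of these. Area sequences of Dyck paths of length $n$ are the sequences $(a_1,\dots,a_n)$ of nonnegative integers with $a_1=0$ and $a_i\le a_{i-1}+1$. For a sequence $w=(w_1,\dots,w_n)$ of nonnegative integers, $P(w)$ is the poset on $\{1,\dots,n\}$ with $i\prec j$ iff $w_j-w_i\ge2$, or $w_j-w_i=1$ and $i<j$. Levels: $\ell(1)=0$ and $\ell(j)=\max_{i\prec j}\ell(i)+1$ for $j\ge2$, with $\ell(j)=0$ if no $i\prec j$. Algorithm: $q_1=(0)$; given $q_{i-1}$, let $C_i$ be the number of $k\prec i$ with $\ell(k)=\ell(i)-1$, and obtain $q_i$ by inserting a letter $\ell(i)$ into $q_{i-1}$ directly after the (possibly empty) run of letters $\ell(i)$ immediately following the $C_i$-th occurrence of the letter $\ell(i)-1$ (the 0-th occurrence meaning the start of the word); $q(U)=q_n$. *)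

theory Defs
  imports Complex_Main
begin

text \<open>Relations on the carrier {1..n} are sets of pairs; (i,j) \<in> R means i \<prec> j.\<close>

definition unit_interval_orders :: "nat \<Rightarrow> (nat \<times> nat) set set" where
  "unit_interval_orders n =
     {R. \<exists>x :: nat \<Rightarrow> real.
           (\<forall>i j. 1 \<le> i \<longrightarrow> i \<le> j \<longrightarrow> j \<le> n \<longrightarrow> x i \<le> x j) \<and>
           R = {(i, j). i \<in> {1..n} \<and> j \<in> {1..n} \<and> x i + 1 < x j}}"

text \<open>Area sequences of Dyck paths of length n, as lists (entry a_i is w ! (i-1)).\<close>
definition area_seq :: "nat \<Rightarrow> nat list \<Rightarrow> bool" where
  "area_seq n w \<longleftrightarrow> length w = n \<and> (n > 0 \<longrightarrow> w ! 0 = 0) \<and>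
     (\<forall>i. 0 < i \<longrightarrow> i < n \<longrightarrow> w ! i \<le> w ! (i - 1) + 1)"

definition Pw :: "nat list \<Rightarrow> (nat \<times> nat) set" where
  "Pw w = {(i, j). i \<in> {1..length w} \<and> j \<in> {1..length w} \<and>
      (int (w ! (j - 1)) - int (w ! (i - 1)) \<ge> 2 \<or>
       (int (w ! (j - 1)) - int (w ! (i - 1)) = 1 \<and> i < j))}"

definition poset_iso :: "nat \<Rightarrow> (nat \<times> nat) set \<Rightarrow> (nat \<times> nat) set \<Rightarrow> bool" where
  "poset_iso n R S \<longleftrightarrow> (\<exists>f. bij_betw f {1..n} {1..n} \<and>
      (\<forall>i\<in>{1..n}. \<forall>j\<in>{1..n}. (i, j) \<in> R \<longleftrightarrow> (f i, f j) \<in> S))"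

text \<open>Levels: list whose (j-1)-th entry is \<ell>(j). For unit interval orders i \<prec> j implies i < j,
  so the maximum over the predecessors only involves already computed levels.\<close>
fun levs :: "(nat \<times> nat) set \<Rightarrow> nat \<Rightarrow> nat list" where
  "levs R 0 = []"
| "levs R (Suc m) = (let L = levs R m in
     L @ [Max (insert 0 {Suc (L ! (i - 1)) | i. i \<in> {1..m} \<and> (i, Suc m) \<in> R})])"

definition lev :: "(nat \<times> nat) set \<Rightarrow> nat \<Rightarrow> nat" where
  "lev R j = levs R j ! (j - 1)"

text \<open>Position just after the c-th occurrence of letter a (0 for c = 0, the start of the word).\<close>
fun after_occ :: "nat \<Rightarrow> nat \<Rightarrow> nat list \<Rightarrow> nat" where
  "after_occ a 0 q = 0"
| "after_occ a (Suc c) [] = 0"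
| "after_occ a (Suc c) (x # xs) = Suc (if x = a then after_occ a c xs else after_occ a (Suc c) xs)"

definition insert_after_run :: "nat \<Rightarrow> nat \<Rightarrow> nat list \<Rightarrow> nat list" where
  "insert_after_run p b q =
     (let p' = p + length (takeWhile (\<lambda>x. x = b) (drop p q)) in take p' q @ [b] @ drop p' q)"

definition C_count :: "nat \<Rightarrow> (nat \<times> nat) set \<Rightarrow> nat \<Rightarrow> nat" where
  "C_count n R i = card {k \<in> {1..n}. (k, i) \<in> R \<and> int (lev R k) = int (lev R i) - 1}"

fun q_step :: "nat \<Rightarrow> (nat \<times> nat) set \<Rightarrow> nat \<Rightarrow> nat list" where
  "q_step n R 0 = []"
| "q_step n R (Suc 0) = [0]"
| "q_step n R (Suc (Suc m)) =
     (let i = Suc (Suc m); q = q_step n R (Suc m); l = lev R i in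
      (if l = 0 then insert_after_run 0 l q
       else insert_after_run (after_occ (l - 1) (C_count n R i) q) l q))"

definition qU :: "nat \<Rightarrow> (nat \<times> nat) set \<Rightarrow> nat list" where
  "qU n U = q_step n U n"

end

theory Submission
  imports Defs
begin

lemma length_levs[simp]: "length (levs R m) = m"
  by (induction m) (auto simp: Let_def)

lemma levs_nth: "i < m \<Longrightarrow> levs R m ! i = levs R (Suc i) ! i"
proof (induction m)
  case 0 then show ?case by simp
next
  case (Suc m)
  show ?case
  proof (cases "i = m")
    case True then show ?thesis by simp
  next
    case False
    then have "i < m" using Suc.prems by simp
    then have "levs R (Suc m) ! i = levs R m ! i" by (simp add: Let_def nth_append)
    then show ?thesis using Suc.IH \<open>i < m\<close> by simp
  qed
qed

lemma levs_lev: "1 \<le> i \<Longrightarrow> i \<le> m \<Longrightarrow> levs R m ! (i - 1) = lev R i"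
  using levs_nth[of "i - 1" m R] by (simp add: lev_def)

lemma lev_rec0: "1 \<le> j \<Longrightarrow> lev R j =
   Max (insert 0 {Suc (lev R i) | i. i \<in> {1..j-1} \<and> (i, j) \<in> R})"
proof -
  assume j: "1 \<le> j"
  then obtain m where m: "j = Suc m" by (cases j) auto
  have "lev R j = Max (insert 0 {Suc (levs R m ! (i - 1)) | i. i \<in> {1..m} \<and> (i, Suc m) \<in> R})"
    by (simp add: lev_def m Let_def nth_append)
  also have "{Suc (levs R m ! (i - 1)) | i. i \<in> {1..m} \<and> (i, Suc m) \<in> R}
      = {Suc (lev R i) | i. i \<in> {1..j-1} \<and> (i, j) \<in> R}"
    using levs_lev[of _ m R] m by force
  finally show ?thesis .
qed

lemma lev_1[simp]: "lev R 1 = 0"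
  by (simp add: lev_def)

fun stp :: "nat list \<Rightarrow> bool" where
  "stp (a # b # xs) = (b \<le> a + 1 \<and> stp (b # xs))"
| "stp _ = True"

lemma stp_Cons: "stp (a # xs) \<longleftrightarrow> stp xs \<and> (xs \<noteq> [] \<longrightarrow> hd xs \<le> a + 1)"
  by (cases xs) auto

lemma stp_append: "stp (xs @ ys) \<longleftrightarrow> stp xs \<and> stp ys \<and> (xs \<noteq> [] \<longrightarrow> ys \<noteq> [] \<longrightarrow> hd ys \<le> last xs + 1)"
  by (induction xs) (auto simp: stp_Cons)

lemma stp_nth: "stp w \<longleftrightarrow> (\<forall>i. 0 < i \<longrightarrow> i < length w \<longrightarrow> w ! i \<le> w ! (i - 1) + 1)"
proof (induction w rule: stp.induct)
  case (1 a b xs)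
  show ?case
  proof
    assume "stp (a # b # xs)"
    then have h: "b \<le> a + 1" "stp (b # xs)" by auto
    show "\<forall>i. 0 < i \<longrightarrow> i < length (a # b # xs) \<longrightarrow> (a # b # xs) ! i \<le> (a # b # xs) ! (i - 1) + 1"
    proof (intro allI impI)
      fix i assume i: "0 < i" "i < length (a # b # xs)"
      show "(a # b # xs) ! i \<le> (a # b # xs) ! (i - 1) + 1"
      proof (cases "i = 1")
        case True then show ?thesis using h by simp
      next
        case False
        then have "0 < i - 1" "i - 1 < length (b # xs)" using i by auto
        then have "(b # xs) ! (i - 1) \<le> (b # xs) ! (i - 1 - 1) + 1" using h 1 by blast
        moreover have "(a # b # xs) ! i = (b # xs) ! (i - 1)" using i by (cases i) auto
        moreover have "(a # b # xs) ! (i - 1) = (b # xs) ! (i - 1 - 1)" using i False by (cases i) auto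
        ultimately show ?thesis by simp
      qed
    qed
  next
    assume H: "\<forall>i. 0 < i \<longrightarrow> i < length (a # b # xs) \<longrightarrow> (a # b # xs) ! i \<le> (a # b # xs) ! (i - 1) + 1"
    have "b \<le> a + 1" using H[rule_format, of 1] by simp
    moreover have "stp (b # xs)"
      unfolding 1
    proof (intro allI impI)
      fix i assume i: "0 < i" "i < length (b # xs)"
      have "(a # b # xs) ! (Suc i) \<le> (a # b # xs) ! (Suc i - 1) + 1" using H i by auto
      then show "(b # xs) ! i \<le> (b # xs) ! (i - 1) + 1" using i by (cases i) auto
    qed
    ultimately show "stp (a # b # xs)" by simp
  qed
next
  case ("2_1") then show ?case by simp
next
  case ("2_2" v) then show ?case by simp
qed

lemma area_seq_stp: "area_seq n w \<longleftrightarrow> length w = n \<and> (w \<noteq> [] \<longrightarrow> hd w = 0) \<and> stp w"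
  unfolding area_seq_def stp_nth by (auto simp: hd_conv_nth)

lemma stp_drop: "stp w \<Longrightarrow> stp (drop p w)"
  using stp_append[of "take p w" "drop p w"] by simp

lemma stp_take: "stp w \<Longrightarrow> stp (take p w)"
  using stp_append[of "take p w" "drop p w"] by simp

lemma stp_ivt: "stp zs \<Longrightarrow> t < length zs \<Longrightarrow> zs ! 0 \<le> a \<Longrightarrow> a < zs ! t \<Longrightarrow> \<exists>s<t. zs ! s = a"
proof (induction zs arbitrary: t)
  case Nil then show ?case by simp
next
  case (Cons z zs)
  have t0: "t \<noteq> 0"
  proof
    assume "t = 0" then show False using Cons.prems by simp
  qed
  show ?case
  proof (cases "z = a")
    case True then show ?thesis using t0 by auto
  next
    case False
    then have za: "z < a" using Cons.prems by simp
    obtain t' where t': "t = Suc t'" using t0 by (cases t) auto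
    have zs: "zs \<noteq> []" using Cons.prems t' by auto
    have "hd zs \<le> z + 1" using Cons.prems(1) zs by (simp add: stp_Cons)
    then have "zs ! 0 \<le> a" using za zs by (simp add: hd_conv_nth)
    moreover have "stp zs" using Cons.prems(1) by (simp add: stp_Cons)
    ultimately obtain s where "s < t'" "zs ! s = a" using Cons.IH[of t'] Cons.prems t' by auto
    then show ?thesis using t' by (intro exI[of _ "Suc s"]) auto
  qed
qed

definition cnt :: "nat \<Rightarrow> nat list \<Rightarrow> nat" where
  "cnt a xs = length (filter (\<lambda>x. x = a) xs)"

lemma cnt_append[simp]: "cnt a (xs @ ys) = cnt a xs + cnt a ys"
  by (simp add: cnt_def)

lemma cnt_Cons[simp]: "cnt a (x # xs) = (if x = a then Suc (cnt a xs) else cnt a xs)"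
  by (simp add: cnt_def)

lemma cnt_Nil[simp]: "cnt a [] = 0"
  by (simp add: cnt_def)

lemma cnt_take_le: "cnt a (take p xs) \<le> cnt a xs"
  using cnt_append[of a "take p xs" "drop p xs"] by simp

lemma cnt_pos: "a \<in> set xs \<Longrightarrow> 0 < cnt a xs"
  by (induction xs) auto

lemma cnt_map_distinct: "distinct xs \<Longrightarrow> cnt a (map f xs) = card {k \<in> set xs. f k = a}"
proof (induction xs)
  case Nil then show ?case by simp
next
  case (Cons y ys)
  have "{k \<in> set (y # ys). f k = a} = (if f y = a then insert y {k \<in> set ys. f k = a} else {k \<in> set ys. f k = a})"
    by auto
  then show ?case using Cons by auto
qed

lemma after_occ_props:
  "1 \<le> C \<Longrightarrow> C \<le> cnt a W \<Longrightarrow>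
   1 \<le> after_occ a C W \<and> after_occ a C W \<le> length W \<and> cnt a (take (after_occ a C W) W) = C
   \<and> W ! (after_occ a C W - 1) = a"
proof (induction a C W rule: after_occ.induct)
  case (1 a q) then show ?case by simp
next
  case (2 a c) then show ?case by simp
next
  case (3 a c x xs)
  show ?case
  proof (cases "x = a")
    case True
    show ?thesis
    proof (cases "c = 0")
      case True
      then show ?thesis using \<open>x = a\<close> by simp
    next
      case False
      then have "1 \<le> c" "c \<le> cnt a xs" using "3.prems" \<open>x = a\<close> by auto
      then have IH: "1 \<le> after_occ a c xs \<and> after_occ a c xs \<le> length xs \<and> cnt a (take (after_occ a c xs) xs) = c
   \<and> xs ! (after_occ a c xs - 1) = a" using 3(1) True by blast
      then show ?thesis using True by (cases "after_occ a c xs") auto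
    qed
  next
    case False
    then have "1 \<le> Suc c" "Suc c \<le> cnt a xs" using "3.prems" by auto
    then have IH: "1 \<le> after_occ a (Suc c) xs \<and> after_occ a (Suc c) xs \<le> length xs \<and> cnt a (take (after_occ a (Suc c) xs) xs) = Suc c
   \<and> xs ! (after_occ a (Suc c) xs - 1) = a" using 3(2) False by blast
    then show ?thesis using False by (cases "after_occ a (Suc c) xs") auto
  qed
qed

definition rp :: "nat \<Rightarrow> nat \<Rightarrow> nat list \<Rightarrow> nat" where
  "rp p b q = p + length (takeWhile (\<lambda>x. x = b) (drop p q))"

lemma insert_after_run_rp: "insert_after_run p b q = take (rp p b q) q @ [b] @ drop (rp p b q) q"
  by (simp add: insert_after_run_def rp_def Let_def)

lemma rp_props:
  assumes "p \<le> length W"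
  shows "p \<le> rp p b W" "rp p b W \<le> length W"
    "take (rp p b W) W = take p W @ takeWhile (\<lambda>x. x = b) (drop p W)"
    "rp p b W < length W \<Longrightarrow> W ! rp p b W \<noteq> b"
    "p < rp p b W \<Longrightarrow> W ! (rp p b W - 1) = b"
proof -
  let ?t = "takeWhile (\<lambda>x. x = b) (drop p W)"
  have lt: "length ?t \<le> length (drop p W)" by (rule length_takeWhile_le)
  show "p \<le> rp p b W" by (simp add: rp_def)
  show "rp p b W \<le> length W" using lt assms by (simp add: rp_def)
  have "take (rp p b W) W = take p W @ take (length ?t) (drop p W)"
    by (simp add: rp_def take_add)
  also have "take (length ?t) (drop p W) = ?t" by (rule takeWhile_eq_take[symmetric])
  finally show "take (rp p b W) W = take p W @ ?t" .
  show "rp p b W < length W \<Longrightarrow> W ! rp p b W \<noteq> b"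
  proof -
    assume "rp p b W < length W"
    then have "length ?t < length (drop p W)" using assms by (simp add: rp_def)
    from nth_length_takeWhile[OF this] show ?thesis using assms by (simp add: rp_def)
  qed
  show "p < rp p b W \<Longrightarrow> W ! (rp p b W - 1) = b"
  proof -
    assume "p < rp p b W"
    then have l: "length ?t - 1 < length ?t" by (simp add: rp_def)
    have "?t ! (length ?t - 1) \<in> set ?t" using l by (rule nth_mem)
    then have e1: "?t ! (length ?t - 1) = b" by (drule_tac set_takeWhileD) simp
    have e2: "?t ! (length ?t - 1) = drop p W ! (length ?t - 1)" using takeWhile_nth[OF l] .
    have pos: "0 < length ?t" using \<open>p < rp p b W\<close> by (simp add: rp_def)
    have e3: "p + (length ?t - 1) = rp p b W - 1" using pos unfolding rp_def by arith
    have e4: "drop p W ! (length ?t - 1) = W ! (p + (length ?t - 1))" using assms by (rule nth_drop)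
    show ?thesis using e1 e2 e3 e4 by simp
  qed
qed

lemma cnt_takeWhile: "a \<noteq> b \<Longrightarrow> cnt a (takeWhile (\<lambda>x. x = b) xs) = 0"
  by (induction xs) auto

lemma K1:
  assumes "1 \<le> C" "C \<le> cnt a W"
  defines "p \<equiv> rp (after_occ a C W) (Suc a) W"
  shows "1 \<le> p \<and> p \<le> length W \<and> cnt a (take p W) = C \<and> W ! (p - 1) \<in> {a, Suc a}
        \<and> (p < length W \<longrightarrow> W ! p \<noteq> Suc a)"
proof -
  let ?p0 = "after_occ a C W"
  have A: "1 \<le> ?p0" "?p0 \<le> length W" "cnt a (take ?p0 W) = C" "W ! (?p0 - 1) = a"
    using after_occ_props[OF assms(1,2)] by auto
  note R = rp_props[OF A(2), of "Suc a"]
  have "cnt a (take p W) = C" using R(3) A(3) cnt_takeWhile[of a "Suc a"] by (simp add: p_def)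
  moreover have "W ! (p - 1) \<in> {a, Suc a}"
    using R(1) R(5) A(4) unfolding p_def by (cases "?p0 < rp ?p0 (Suc a) W") auto
  ultimately show ?thesis using R(1,2,4) A(1) unfolding p_def by auto
qed

lemma cnt_lt:
  assumes "p \<le> r" "r < p'" "p' \<le> length W" "W ! r = a"
  shows "cnt a (take p W) < cnt a (take p' W)"
proof -
  have "take p' W = take p W @ take (p' - p) (drop p W)"
    using assms by (metis le_add_diff_inverse le_trans less_imp_le take_add)
  moreover have "a \<in> set (take (p' - p) (drop p W))"
  proof -
    have "take (p' - p) (drop p W) ! (r - p) = W ! r" using assms by simp
    moreover have "r - p < length (take (p' - p) (drop p W))" using assms by simp
    ultimately show ?thesis using assms(4) by (metis nth_mem)
  qed
  ultimately show ?thesis using cnt_pos by fastforce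
qed

lemma K2_aux:
  assumes st: "stp W" and le: "\<forall>v\<in>set W. v \<le> Suc a"
    and pp: "p < p'" "p' \<le> length W"
    and c: "cnt a (take p W) = cnt a (take p' W)"
    and l': "W ! (p' - 1) \<in> {a, Suc a}"
    and n: "p < length W \<longrightarrow> W ! p \<noteq> Suc a"
  shows False
proof -
  have "\<exists>r. p \<le> r \<and> r < p' \<and> W ! r = a"
  proof (cases "W ! (p' - 1) = a")
    case True then show ?thesis using pp by (intro exI[of _ "p' - 1"]) auto
  next
    case False
    then have wa: "W ! (p' - 1) = Suc a" using l' by auto
    let ?zs = "drop p W"
    have "W ! p \<in> set W" using pp by simp
    then have "W ! p \<le> a" using le n pp by fastforce
    then have "?zs ! 0 \<le> a" using pp by simp
    moreover have "a < ?zs ! (p' - 1 - p)" using wa pp by simp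
    moreover have "p' - 1 - p < length ?zs" using pp by simp
    ultimately obtain s where "s < p' - 1 - p" "?zs ! s = a"
      using stp_ivt[OF stp_drop[OF st]] by blast
    then show ?thesis using pp by (intro exI[of _ "p + s"]) auto
  qed
  then obtain r where "p \<le> r" "r < p'" "W ! r = a" by blast
  then show False using cnt_lt[of p r p' W a] pp c by simp
qed

lemma K2:
  assumes st: "stp W" and le: "\<forall>v\<in>set W. v \<le> Suc a"
    and p: "1 \<le> p" "p \<le> length W" "W ! (p - 1) \<in> {a, Suc a}" "p < length W \<longrightarrow> W ! p \<noteq> Suc a"
    and p': "1 \<le> p'" "p' \<le> length W" "W ! (p' - 1) \<in> {a, Suc a}" "p' < length W \<longrightarrow> W ! p' \<noteq> Suc a"
    and c: "cnt a (take p W) = cnt a (take p' W)"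
  shows "p = p'"
proof (rule ccontr)
  assume "p \<noteq> p'"
  then consider "p < p'" | "p' < p" by linarith
  then show False
  proof cases
    case 1 then show False using K2_aux[OF st le 1 p'(2) c p'(3) p(4)] by blast
  next
    case 2 then show False using K2_aux[OF st le 2 p(2) c[symmetric] p(3) p'(4)] by blast
  qed
qed

fun bef :: "nat list \<Rightarrow> nat \<Rightarrow> nat \<Rightarrow> bool" where
  "bef [] x y = False"
| "bef (z # zs) x y = ((z = x \<and> y \<in> set zs) \<or> bef zs x y)"

lemma bef_append: "bef (xs @ ys) x y \<longleftrightarrow> bef xs x y \<or> bef ys x y \<or> (x \<in> set xs \<and> y \<in> set ys)"
  by (induction xs) auto

lemma bef_set: "bef xs x y \<Longrightarrow> x \<in> set xs \<and> y \<in> set xs"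
  by (induction xs) auto

lemma bef_filter: "bef (filter P xs) x y \<longleftrightarrow> P x \<and> P y \<and> bef xs x y"
  by (induction xs) auto

lemma bef_asym: "distinct xs \<Longrightarrow> bef xs x y \<Longrightarrow> \<not> bef xs y x"
  by (induction xs) (auto dest: bef_set)

lemma bef_total: "x \<in> set xs \<Longrightarrow> y \<in> set xs \<Longrightarrow> x \<noteq> y \<Longrightarrow> bef xs x y \<or> bef xs y x"
  by (induction xs) auto

lemma bef_irrefl: "distinct xs \<Longrightarrow> \<not> bef xs x x"
  by (induction xs) (auto dest: bef_set)

lemma bef_nth: "distinct xs \<Longrightarrow> a < length xs \<Longrightarrow> b < length xs \<Longrightarrow> bef xs (xs ! a) (xs ! b) \<longleftrightarrow> a < b"
proof (induction xs arbitrary: a b)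
  case Nil then show ?case by simp
next
  case (Cons z zs)
  have zn: "z \<notin> set zs" and dz: "distinct zs" using Cons.prems by auto
  show ?case
  proof (cases a)
    case 0
    show ?thesis
    proof (cases b)
      case 0 then show ?thesis using \<open>a = 0\<close> bef_irrefl[OF Cons.prems(1)] by simp
    next
      case (Suc b')
      then have "zs ! b' \<in> set zs" using Cons.prems by simp
      then show ?thesis using \<open>a = 0\<close> Suc by simp
    qed
  next
    case (Suc a')
    have za: "zs ! a' \<in> set zs" using Cons.prems Suc by simp
    then have ne: "z \<noteq> zs ! a'" using zn by auto
    show ?thesis
    proof (cases b)
      case 0
      have "\<not> bef zs (zs ! a') z" using zn bef_set by blast
      then show ?thesis using Suc 0 ne by simp
    next
      case (Suc b')
      have "bef zs (zs ! a') (zs ! b') \<longleftrightarrow> a' < b'"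
        using Cons.IH[OF dz] Cons.prems \<open>a = Suc a'\<close> Suc by simp
      then show ?thesis using \<open>a = Suc a'\<close> Suc ne by simp
    qed
  qed
qed

lemma downclosed_eq:
  assumes "finite A" "S1 \<subseteq> A" "S2 \<subseteq> A"
    and d1: "\<forall>y\<in>A. \<forall>z\<in>S1. (y::nat) < z \<longrightarrow> y \<in> S1"
    and d2: "\<forall>y\<in>A. \<forall>z\<in>S2. y < z \<longrightarrow> y \<in> S2"
    and c: "card S1 = card S2"
  shows "S1 = S2"
proof -
  have main: "T2 \<subseteq> T1" if h: "finite A" "T1 \<subseteq> A" "T2 \<subseteq> A"
    "\<forall>y\<in>A. \<forall>z\<in>T1. (y::nat) < z \<longrightarrow> y \<in> T1"
    "\<forall>y\<in>A. \<forall>z\<in>T2. y < z \<longrightarrow> y \<in> T2" "card T1 = card T2" for T1 T2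
  proof (rule ccontr)
    assume "\<not> T2 \<subseteq> T1"
    then obtain x where x: "x \<in> T2" "x \<notin> T1" by auto
    have "T1 \<subseteq> T2 - {x}"
    proof
      fix y assume y: "y \<in> T1"
      have "\<not> x < y" using h(4) y x h(3) by blast
      moreover have "y \<noteq> x" using x y by auto
      ultimately have "y < x" by simp
      then show "y \<in> T2 - {x}" using h(5) y x h(2) by blast
    qed
    moreover have "finite T2" using h(1,3) finite_subset by blast
    ultimately have "card T1 \<le> card (T2 - {x})" by (simp add: card_mono)
    also have "\<dots> < card T2" using x \<open>finite T2\<close> by (intro card_Diff1_less)
    finally show False using h(6) by simp
  qed
  show ?thesis using main[OF assms(1,2,3) d1 d2 c] main[OF assms(1,3,2) d2 d1 c[symmetric]] by blast
qed

locale NU =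
  fixes n :: nat and U :: "(nat \<times> nat) set" and x :: "nat \<Rightarrow> real"
  assumes mono: "\<And>i j. 1 \<le> i \<Longrightarrow> i \<le> j \<Longrightarrow> j \<le> n \<Longrightarrow> x i \<le> x j"
    and U_eq: "U = {(i, j). i \<in> {1..n} \<and> j \<in> {1..n} \<and> x i + 1 < x j}"
begin

lemma U_iff: "(i, j) \<in> U \<longleftrightarrow> 1 \<le> i \<and> i \<le> n \<and> 1 \<le> j \<and> j \<le> n \<and> x i + 1 < x j"
  using U_eq by auto

lemma U_lt: "(i, j) \<in> U \<Longrightarrow> i < j \<and> 1 \<le> i \<and> j \<le> n"
proof -
  assume h: "(i, j) \<in> U"
  then have a: "1 \<le> i" "i \<le> n" "1 \<le> j" "j \<le> n" "x i + 1 < x j" using U_iff by auto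
  have "i < j"
  proof (rule ccontr)
    assume "\<not> i < j"
    then have "x j \<le> x i" using mono[of j i] a by simp
    then show False using a by simp
  qed
  then show ?thesis using a by simp
qed

lemma U_mem: "(i, j) \<in> U \<Longrightarrow> i \<in> {1..j-1}"
  using U_lt by fastforce

lemma predset_eq: "{Suc (lev U i) | i. i \<in> {1..j-1} \<and> (i, j) \<in> U} = {Suc (lev U i) | i. (i, j) \<in> U}"
  using U_mem by blast

lemma predset_fin: "finite {Suc (lev U i) | i. (i, j) \<in> U}"
proof -
  have "{i. (i, j) \<in> U} \<subseteq> {1..n}" using U_lt by fastforce
  then have "finite {i. (i, j) \<in> U}" using finite_subset by blast
  then show ?thesis by (rule finite_image_set)
qed

lemma lev_rec: "1 \<le> j \<Longrightarrow> lev U j = Max (insert 0 {Suc (lev U i) | i. (i, j) \<in> U})"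
  using lev_rec0[of j U] predset_eq by simp

lemma lev_gt: "(k, j) \<in> U \<Longrightarrow> lev U k < lev U j"
proof -
  assume h: "(k, j) \<in> U"
  then have j: "1 \<le> j" using U_lt by force
  have "Suc (lev U k) \<in> insert 0 {Suc (lev U i) | i. (i, j) \<in> U}" using h by blast
  then have "Suc (lev U k) \<le> Max (insert 0 {Suc (lev U i) | i. (i, j) \<in> U})"
    using predset_fin by simp
  then show ?thesis using lev_rec[OF j] by simp
qed

lemma lev_pred: "1 \<le> j \<Longrightarrow> 0 < lev U j \<Longrightarrow> \<exists>k. (k, j) \<in> U \<and> Suc (lev U k) = lev U j"
proof -
  assume j: "1 \<le> j" and p: "0 < lev U j"
  let ?S = "insert 0 {Suc (lev U i) | i. (i, j) \<in> U}"
  have "Max ?S \<in> ?S" using predset_fin by (intro Max_in) auto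
  moreover have "Max ?S \<noteq> 0" using p lev_rec[OF j] by simp
  ultimately have "Max ?S \<in> {Suc (lev U i) | i. (i, j) \<in> U}" by simp
  then show ?thesis using lev_rec[OF j] by auto
qed

lemma pred_mono: "(k, i) \<in> U \<Longrightarrow> i \<le> j \<Longrightarrow> j \<le> n \<Longrightarrow> (k, j) \<in> U"
proof -
  assume h: "(k, i) \<in> U" "i \<le> j" "j \<le> n"
  then have "1 \<le> i" "x i \<le> x j" using U_iff mono by auto
  then show ?thesis using h U_iff by auto
qed

lemma pred_down: "(k', i) \<in> U \<Longrightarrow> 1 \<le> k \<Longrightarrow> k \<le> k' \<Longrightarrow> (k, i) \<in> U"
proof -
  assume h: "(k', i) \<in> U" "1 \<le> k" "k \<le> k'"
  then have "k' \<le> n" "x k \<le> x k'" using U_iff mono by auto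
  then show ?thesis using h U_iff by auto
qed

lemma lev_mono: "1 \<le> i \<Longrightarrow> i \<le> j \<Longrightarrow> j \<le> n \<Longrightarrow> lev U i \<le> lev U j"
proof -
  assume h: "1 \<le> i" "i \<le> j" "j \<le> n"
  have "{Suc (lev U k) | k. (k, i) \<in> U} \<subseteq> {Suc (lev U k) | k. (k, j) \<in> U}"
  proof
    fix y assume "y \<in> {Suc (lev U k) | k. (k, i) \<in> U}"
    then obtain k where k: "y = Suc (lev U k)" "(k, i) \<in> U" by blast
    then have "(k, j) \<in> U" using pred_mono h by blast
    then show "y \<in> {Suc (lev U k) | k. (k, j) \<in> U}" using k by blast
  qed
  then have "insert 0 {Suc (lev U k) | k. (k, i) \<in> U} \<subseteq> insert 0 {Suc (lev U k) | k. (k, j) \<in> U}"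
    by (rule insert_mono)
  then have "Max (insert 0 {Suc (lev U k) | k. (k, i) \<in> U}) \<le> Max (insert 0 {Suc (lev U k) | k. (k, j) \<in> U})"
    using predset_fin by (intro Max_mono) auto
  then show ?thesis using lev_rec h by simp
qed

lemma lev_far: "1 \<le> k \<Longrightarrow> k \<le> n \<Longrightarrow> 1 \<le> j \<Longrightarrow> j \<le> n \<Longrightarrow> lev U k + 2 \<le> lev U j \<Longrightarrow> (k, j) \<in> U"
proof (rule ccontr)
  assume h: "1 \<le> k" "k \<le> n" "1 \<le> j" "j \<le> n" "lev U k + 2 \<le> lev U j" "(k, j) \<notin> U"
  have "0 < lev U j" using h by simp
  then obtain j2 where j2: "(j2, j) \<in> U" "Suc (lev U j2) = lev U j" using lev_pred[OF h(3)] by blast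
  have "1 \<le> j2" using j2 U_lt by blast
  have "0 < lev U j2" using h j2 by simp
  then obtain j1 where j1: "(j1, j2) \<in> U" "Suc (lev U j1) = lev U j2" using lev_pred[OF \<open>1 \<le> j2\<close>] by blast
  have "\<not> x k + 1 < x j" using h U_iff by blast
  then have "x j \<le> x k + 1" by simp
  moreover have "x j2 + 1 < x j" "x j1 + 1 < x j2" using j1 j2 U_iff by auto
  ultimately have "x j1 + 1 < x k" by linarith
  moreover have "1 \<le> j1" "j1 \<le> n" using j1 U_iff by auto
  ultimately have "(j1, k) \<in> U" using U_iff h by blast
  then have "lev U j1 < lev U k" by (rule lev_gt)
  then show False using j1 j2 h by simp
qed

end

definition canon :: "nat \<Rightarrow> (nat \<times> nat) set \<Rightarrow> nat list \<Rightarrow> bool" where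
  "canon m R e \<longleftrightarrow> distinct e \<and> set e = {1..m} \<and> (e \<noteq> [] \<longrightarrow> lev R (hd e) = 0)
     \<and> stp (map (lev R) e)
     \<and> (\<forall>u v. bef e u v \<longrightarrow> lev R u = lev R v \<longrightarrow> u < v)
     \<and> (\<forall>u\<in>set e. \<forall>v\<in>set e. lev R v = Suc (lev R u) \<longrightarrow> ((u, v) \<in> R \<longleftrightarrow> bef e u v))"

lemma canon_length: "canon m R e \<Longrightarrow> length e = m"
  unfolding canon_def using distinct_card by fastforce

lemma bef3: "bef (xs @ [i] @ ys) u v \<longleftrightarrow> bef (xs @ ys) u v \<or> (u \<in> set xs \<and> v = i) \<or> (u = i \<and> v \<in> set ys)"
  by (auto simp: bef_append)

definition ipt :: "nat \<Rightarrow> (nat \<times> nat) set \<Rightarrow> nat \<Rightarrow> nat list \<Rightarrow> nat" where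
  "ipt n R i q = (let l = lev R i in if l = 0 then rp 0 l q else rp (after_occ (l - 1) (C_count n R i) q) l q)"

lemma q_step_SS: "q_step n R (Suc (Suc m)) =
   take (ipt n R (Suc (Suc m)) (q_step n R (Suc m))) (q_step n R (Suc m)) @ [lev R (Suc (Suc m))]
   @ drop (ipt n R (Suc (Suc m)) (q_step n R (Suc m))) (q_step n R (Suc m))"
  by (simp add: Let_def ipt_def insert_after_run_rp)

fun exl :: "nat \<Rightarrow> (nat \<times> nat) set \<Rightarrow> nat \<Rightarrow> nat list" where
  "exl n R 0 = []"
| "exl n R (Suc 0) = [1]"
| "exl n R (Suc (Suc m)) = take (ipt n R (Suc (Suc m)) (map (lev R) (exl n R (Suc m)))) (exl n R (Suc m))
     @ [Suc (Suc m)] @ drop (ipt n R (Suc (Suc m)) (map (lev R) (exl n R (Suc m)))) (exl n R (Suc m))"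

lemma Ex_q: "map (lev R) (exl n R m) = q_step n R m"
proof (induction n R m rule: exl.induct)
  case (1 n R) then show ?case by simp
next
  case (2 n R) then show ?case by (simp add: lev_def)
next
  case (3 n R m)
  show ?case unfolding exl.simps(3) q_step_SS 3[symmetric] by (simp add: take_map drop_map)
qed

context NU
begin

lemma canon_iso:
  assumes c: "canon n U e"
  shows "poset_iso n (Pw (map (lev U) e)) U \<and> area_seq n (map (lev U) e)"
proof
  have len: "length e = n" using canon_length[OF c] .
  have d: "distinct e" and se: "set e = {1..n}" using c by (auto simp: canon_def)
  show "area_seq n (map (lev U) e)"
    using c len unfolding canon_def area_seq_stp by (auto simp: hd_map)
  let ?g = "\<lambda>p. e ! (p - 1)"
  have b1: "bij_betw (\<lambda>p. p - 1) {1..n} {..<n}"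
    by (rule bij_betw_byWitness[where f'=Suc]) auto
  have b2: "bij_betw ((!) e) {..<n} {1..n}"
    using bij_betw_nth[OF d] len se by simp
  have bg: "bij_betw ?g {1..n} {1..n}"
    using bij_betw_trans[OF b1 b2] by (simp add: comp_def)
  have gin: "?g p \<in> {1..n}" if "p \<in> {1..n}" for p
    using bg that bij_betwE by blast
  have rel: "(p, q) \<in> Pw (map (lev U) e) \<longleftrightarrow> (?g p, ?g q) \<in> U" if pq: "p \<in> {1..n}" "q \<in> {1..n}" for p q
  proof -
    have w: "map (lev U) e ! (p - 1) = lev U (?g p)" "map (lev U) e ! (q - 1) = lev U (?g q)"
      using pq len by auto
    have P: "(p, q) \<in> Pw (map (lev U) e) \<longleftrightarrow>
       (int (lev U (?g q)) - int (lev U (?g p)) \<ge> 2 \<or> (int (lev U (?g q)) - int (lev U (?g p)) = 1 \<and> p < q))"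
      using pq len w unfolding Pw_def by auto
    consider "lev U (?g p) + 2 \<le> lev U (?g q)" | "lev U (?g q) = Suc (lev U (?g p))" | "lev U (?g q) \<le> lev U (?g p)"
      by linarith
    then show ?thesis
    proof cases
      case 1
      then have "(?g p, ?g q) \<in> U" using lev_far gin pq by auto
      then show ?thesis using P 1 by auto
    next
      case 2
      have "?g p \<in> set e" "?g q \<in> set e" using gin pq se by auto
      then have "(?g p, ?g q) \<in> U \<longleftrightarrow> bef e (?g p) (?g q)" using c 2 unfolding canon_def by blast
      also have "\<dots> \<longleftrightarrow> p - 1 < q - 1" using bef_nth[OF d, of "p - 1" "q - 1"] pq len by auto
      also have "\<dots> \<longleftrightarrow> p < q" using pq by auto
      finally show ?thesis using P 2 by auto
    next
      case 3
      then have "(?g p, ?g q) \<notin> U" using lev_gt by fastforce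
      then show ?thesis using P 3 by auto
    qed
  qed
  show "poset_iso n (Pw (map (lev U) e)) U"
    unfolding poset_iso_def using bg rel by blast
qed

end

lemma canonD:
  assumes "canon m R e"
  shows "distinct e" "set e = {1..m}" "e \<noteq> [] \<Longrightarrow> lev R (hd e) = 0" "stp (map (lev R) e)"
    "bef e u v \<Longrightarrow> lev R u = lev R v \<Longrightarrow> u < v"
    "u \<in> set e \<Longrightarrow> v \<in> set e \<Longrightarrow> lev R v = Suc (lev R u) \<Longrightarrow> (u, v) \<in> R \<longleftrightarrow> bef e u v"
  using assms unfolding canon_def by auto

context NU
begin

lemma canon_remove:
  assumes c: "canon (Suc m) U e" and mn: "Suc m \<le> n"
  shows "\<exists>xs ys. e = xs @ [Suc m] @ ys \<and> filter (\<lambda>x. x \<le> m) e = xs @ ys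
     \<and> (\<forall>y\<in>set ys. lev U y < lev U (Suc m)) \<and> (\<forall>y\<in>set e. lev U y \<le> lev U (Suc m))
     \<and> canon m U (filter (\<lambda>x. x \<le> m) e)"
proof -
  have d: "distinct e" and se: "set e = {1..Suc m}" using c by (auto simp: canon_def)
  have "Suc m \<in> set e" using se by simp
  then obtain xs ys where e: "e = xs @ [Suc m] @ ys" using split_list[of "Suc m" e] by auto
  have nx: "Suc m \<notin> set xs" "Suc m \<notin> set ys" using d e by auto
  have sx: "set xs \<subseteq> {1..Suc m}" "set ys \<subseteq> {1..Suc m}" using se e by auto
  have fx: "filter (\<lambda>x. x \<le> m) xs = xs"
  proof (rule filter_True)
    show "\<forall>x\<in>set xs. x \<le> m" using nx(1) sx(1) by (metis atLeastAtMost_iff le_Suc_eq subsetD)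
  qed
  have fy: "filter (\<lambda>x. x \<le> m) ys = ys"
  proof (rule filter_True)
    show "\<forall>x\<in>set ys. x \<le> m" using nx(2) sx(2) by (metis atLeastAtMost_iff le_Suc_eq subsetD)
  qed
  have f: "filter (\<lambda>x. x \<le> m) e = xs @ ys" using e fx fy by simp
  have lle: "\<forall>y\<in>set e. lev U y \<le> lev U (Suc m)"
    using se mn lev_mono by auto
  have ylt: "\<forall>y\<in>set ys. lev U y < lev U (Suc m)"
  proof
    fix y assume y: "y \<in> set ys"
    have "bef e (Suc m) y" using e y by (simp add: bef_append)
    moreover have "y \<le> Suc m" using y e se by auto
    ultimately have "lev U (Suc m) \<noteq> lev U y" using canonD(5)[OF c, of "Suc m" y] by auto
    moreover have "lev U y \<le> lev U (Suc m)" using lle y e by auto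
    ultimately show "lev U y < lev U (Suc m)" by simp
  qed
  have "canon m U (xs @ ys)"
    unfolding canon_def
  proof (intro conjI)
    show "distinct (xs @ ys)" using d e by auto
    have "set (xs @ ys) = set e - {Suc m}" using e nx by auto
    also have "\<dots> = {1..m}" unfolding se by (simp add: atLeastAtMostSuc_conv)
    finally show "set (xs @ ys) = {1..m}" .
    show "xs @ ys \<noteq> [] \<longrightarrow> lev U (hd (xs @ ys)) = 0"
    proof
      assume ne: "xs @ ys \<noteq> []"
      show "lev U (hd (xs @ ys)) = 0"
      proof (cases "xs = []")
        case True
        then have "lev U (Suc m) = 0" using canonD(3)[OF c] e by simp
        moreover have "hd ys \<in> set ys" using ne True by simp
        ultimately show ?thesis using ylt by fastforce
      next
        case False
        then show ?thesis using canonD(3)[OF c] e by simp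
      qed
    qed
    have st: "stp (map (lev U) xs @ [lev U (Suc m)] @ map (lev U) ys)"
      using canonD(4)[OF c] e by simp
    show "stp (map (lev U) (xs @ ys))"
    proof -
      have s1: "stp (map (lev U) xs)" "stp (map (lev U) ys)"
        using st unfolding stp_append by auto
      have "xs \<noteq> [] \<Longrightarrow> ys \<noteq> [] \<Longrightarrow> hd (map (lev U) ys) \<le> last (map (lev U) xs) + 1"
      proof -
        assume ne: "xs \<noteq> []" "ys \<noteq> []"
        have "lev U (Suc m) \<le> last (map (lev U) xs) + 1" using st ne unfolding stp_append by simp
        moreover have "lev U (hd ys) < lev U (Suc m)" using ylt ne by simp
        ultimately show ?thesis using ne by (simp add: hd_map)
      qed
      then show ?thesis using s1 by (simp add: stp_append)
    qed
    show "\<forall>u v. bef (xs @ ys) u v \<longrightarrow> lev U u = lev U v \<longrightarrow> u < v"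
      using canonD(5)[OF c] unfolding f[symmetric] bef_filter by blast
    show "\<forall>u\<in>set (xs @ ys). \<forall>v\<in>set (xs @ ys). lev U v = Suc (lev U u) \<longrightarrow> ((u, v) \<in> U \<longleftrightarrow> bef (xs @ ys) u v)"
    proof (intro ballI impI)
      fix u v assume uv: "u \<in> set (xs @ ys)" "v \<in> set (xs @ ys)" "lev U v = Suc (lev U u)"
      have "u \<in> set e" "v \<in> set e" using uv e by auto
      then have "(u, v) \<in> U \<longleftrightarrow> bef e u v" using canonD(6)[OF c] uv by blast
      moreover have "u \<le> m" "v \<le> m" using uv unfolding f[symmetric] by auto
      ultimately show "(u, v) \<in> U \<longleftrightarrow> bef (xs @ ys) u v" unfolding f[symmetric] bef_filter by blast
    qed
  qed
  then show ?thesis using e f ylt lle by (intro exI[of _ xs] exI[of _ ys]) simp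
qed

lemma canon_filter:
  assumes c: "canon n U e"
  shows "m \<le> n \<Longrightarrow> canon m U (filter (\<lambda>x. x \<le> m) e)"
proof (induction "n - m" arbitrary: m)
  case 0
  then have "m = n" by simp
  moreover have "filter (\<lambda>x. x \<le> n) e = e" using canonD(2)[OF c] by (intro filter_True) auto
  ultimately show ?case using c by simp
next
  case (Suc d)
  then have "Suc m \<le> n" "d = n - Suc m" by auto
  then have IH: "canon (Suc m) U (filter (\<lambda>x. x \<le> Suc m) e)" using Suc.hyps(1) by blast
  have "filter (\<lambda>x. x \<le> m) (filter (\<lambda>x. x \<le> Suc m) e) = filter (\<lambda>x. x \<le> m) e"
    by (simp add: filter_filter) (metis le_SucI)
  then show ?case using canon_remove[OF IH \<open>Suc m \<le> n\<close>] by auto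
qed

end

lemma C_count_eq: "C_count n R i = card {k \<in> {1..n}. (k, i) \<in> R \<and> int (lev R k) = int (lev R i) - 1}"
  by (simp add: C_count_def)

context NU
begin

definition Pset :: "nat \<Rightarrow> nat set" where
  "Pset i = {k. (k, i) \<in> U \<and> Suc (lev U k) = lev U i}"

lemma C_count_Pset: "C_count n U i = card (Pset i)"
proof -
  have "{k \<in> {1..n}. (k, i) \<in> U \<and> int (lev U k) = int (lev U i) - 1} = Pset i"
    unfolding Pset_def using U_lt by force
  then show ?thesis by (simp add: C_count_def)
qed

lemma Pset_fin: "finite (Pset i)"
proof -
  have "Pset i \<subseteq> {1..n}" unfolding Pset_def using U_lt by force
  then show ?thesis using finite_subset by blast
qed

lemma Pset_pos: "1 \<le> i \<Longrightarrow> 0 < lev U i \<Longrightarrow> 1 \<le> card (Pset i)"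
proof -
  assume "1 \<le> i" "0 < lev U i"
  then obtain k where "(k, i) \<in> U" "Suc (lev U k) = lev U i" using lev_pred by blast
  then have "k \<in> Pset i" unfolding Pset_def by blast
  then have "card (Pset i) \<noteq> 0" using Pset_fin by auto
  then show ?thesis by simp
qed

lemma ipt_pos: "0 < lev U i \<Longrightarrow> ipt n U i W = rp (after_occ (lev U i - 1) (card (Pset i)) W) (Suc (lev U i - 1)) W"
  by (simp add: ipt_def C_count_Pset Let_def)

lemma ipt_zero: "lev U i = 0 \<Longrightarrow> \<forall>v\<in>set W. v = 0 \<Longrightarrow> ipt n U i W = length W"
proof -
  assume "lev U i = 0" "\<forall>v\<in>set W. v = 0"
  then have "takeWhile (\<lambda>x. x = 0) W = W" by (simp add: takeWhile_eq_all_conv)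
  then have "length (takeWhile (\<lambda>x. x = 0) W) = length W" by (rule arg_cong)
  then show ?thesis using \<open>lev U i = 0\<close> by (simp add: ipt_def rp_def del: takeWhile_eq_all_conv)
qed

lemma UQ_step:
  assumes c': "canon (Suc (Suc k)) U E'" and kn: "Suc (Suc k) \<le> n"
    and IH: "map (lev U) (filter (\<lambda>x. x \<le> Suc k) E') = q_step n U (Suc k)"
  shows "map (lev U) E' = q_step n U (Suc (Suc k))"
proof -
  let ?i = "Suc (Suc k)"
  let ?l = "lev U ?i"
  obtain xs ys where H: "E' = xs @ [?i] @ ys \<and> filter (\<lambda>x. x \<le> Suc k) E' = xs @ ys
     \<and> (\<forall>y\<in>set ys. lev U y < ?l) \<and> (\<forall>y\<in>set E'. lev U y \<le> ?l)
     \<and> canon (Suc k) U (filter (\<lambda>x. x \<le> Suc k) E')"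
    using canon_remove[OF c' kn] by (elim exE) (erule that)
  note e = conjunct1[OF H]
  note f = conjunct1[OF conjunct2[OF H]]
  note ylt = conjunct1[OF conjunct2[OF conjunct2[OF H]]]
  note lle = conjunct1[OF conjunct2[OF conjunct2[OF conjunct2[OF H]]]]
  have c: "canon (Suc k) U (xs @ ys)" using conjunct2[OF conjunct2[OF conjunct2[OF conjunct2[OF H]]]] f by simp
  define W where "W = map (lev U) (xs @ ys)"
  have Wq: "q_step n U (Suc k) = W" using IH f W_def by simp
  have dE: "distinct E'" using canonD(1)[OF c'] .
  have stW: "stp W" using canonD(4)[OF c] W_def by simp
  have Wle: "\<forall>v\<in>set W. v \<le> ?l" using lle e W_def by auto
  have ptx: "ipt n U ?i W = length xs"
  proof (cases "?l = 0")
    case True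
    then have "ys = []" using ylt by (metis equals0I less_nat_zero_code set_empty2)
    moreover have "\<forall>v\<in>set W. v = 0" using Wle True by simp
    ultimately show ?thesis using ipt_zero[OF True] W_def by simp
  next
    case False
    then have l0: "0 < ?l" by simp
    define a where "a = ?l - 1"
    have la: "?l = Suc a" using l0 a_def by simp
    have Px: "{y \<in> set xs. lev U y = a} = Pset ?i"
    proof
      show "{y \<in> set xs. lev U y = a} \<subseteq> Pset ?i"
      proof
        fix y assume y: "y \<in> {y \<in> set xs. lev U y = a}"
        then have "bef E' y ?i" using e by (simp add: bef_append)
        moreover have "y \<in> set E'" "?i \<in> set E'" using y e by auto
        ultimately have "(y, ?i) \<in> U" using canonD(6)[OF c'] y la by auto
        then show "y \<in> Pset ?i" unfolding Pset_def using y la by auto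
      qed
    next
      show "Pset ?i \<subseteq> {y \<in> set xs. lev U y = a}"
      proof
        fix y assume y: "y \<in> Pset ?i"
        then have yi: "(y, ?i) \<in> U" "Suc (lev U y) = ?l" unfolding Pset_def by auto
        then have "y < ?i" "1 \<le> y" using U_lt by auto
        then have yE: "y \<in> set E'" using canonD(2)[OF c'] by auto
        have iE: "?i \<in> set E'" using e by simp
        have "bef E' y ?i" using canonD(6)[OF c' yE iE] yi by simp
        then have "bef (xs @ [?i] @ ys) y ?i" using e by simp
        then have "bef (xs @ ys) y ?i \<or> (y \<in> set xs \<and> ?i = ?i) \<or> (y = ?i \<and> ?i \<in> set ys)"
          by (simp only: bef3)
        moreover have "?i \<notin> set (xs @ ys)" "?i \<notin> set ys" using e dE by auto
        ultimately have "y \<in> set xs" using bef_set by blast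
        then show "y \<in> {y \<in> set xs. lev U y = a}" using yi la by auto
      qed
    qed
    have dx: "distinct xs" using dE e by simp
    have cx: "cnt a (take (length xs) W) = card (Pset ?i)"
      using cnt_map_distinct[OF dx, of a "lev U"] Px W_def by simp
    have C1: "1 \<le> card (Pset ?i)" using Pset_pos l0 by simp
    have C2: "card (Pset ?i) \<le> cnt a W" using cx cnt_take_le[of a "length xs" W] by simp
    note K = K1[OF C1 C2]
    have ipt: "ipt n U ?i W = rp (after_occ a (card (Pset ?i)) W) (Suc a) W"
      using ipt_pos[OF l0] a_def by simp
    have xne: "xs \<noteq> []"
    proof
      assume "xs = []"
      then have "Pset ?i = {}" using Px by simp
      then show False using C1 by simp
    qed
    have lenW: "length W = length xs + length ys" using W_def by simp
    have last1: "W ! (length xs - 1) = lev U (last xs)"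
      using xne W_def by (simp add: nth_append last_conv_nth)
    have stE: "stp (map (lev U) xs @ [?l] @ map (lev U) ys)" using canonD(4)[OF c'] e by simp
    then have "?l \<le> last (map (lev U) xs) + 1" using xne unfolding stp_append by simp
    then have "?l \<le> lev U (last xs) + 1" using xne by (simp add: last_map)
    moreover have "lev U (last xs) \<le> ?l" using lle e xne by simp
    ultimately have lastx: "W ! (length xs - 1) \<in> {a, Suc a}" using last1 la by auto
    have nxt: "length xs < length W \<longrightarrow> W ! length xs \<noteq> Suc a"
    proof
      assume "length xs < length W"
      then have "ys \<noteq> []" using lenW by simp
      then have "W ! length xs = lev U (hd ys)" using W_def by (simp add: nth_append hd_conv_nth)
      moreover have "lev U (hd ys) < ?l" using ylt \<open>ys \<noteq> []\<close> by simp
      ultimately show "W ! length xs \<noteq> Suc a" using la by simp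
    qed
    have xs1: "1 \<le> length xs" using xne by (simp add: Suc_leI)
    have "rp (after_occ a (card (Pset ?i)) W) (Suc a) W = length xs"
      using K2[OF stW _ _ _ _ _ xs1 _ lastx nxt] Wle la K cx lenW by simp
    then show ?thesis using ipt by simp
  qed
  have "q_step n U (Suc (Suc k)) = take (length xs) W @ [?l] @ drop (length xs) W"
    using q_step_SS[of n U k] Wq ptx by simp
  also have "\<dots> = map (lev U) E'" using W_def e by simp
  finally show ?thesis by simp
qed

lemma UQ:
  assumes c: "canon n U e"
  shows "map (lev U) e = qU n U"
proof -
  have "m \<le> n \<Longrightarrow> map (lev U) (filter (\<lambda>x. x \<le> m) e) = q_step n U m" for m
  proof (induction m rule: less_induct)
    case (less m)
    have cm: "canon m U (filter (\<lambda>x. x \<le> m) e)" using canon_filter[OF c less.prems] .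
    consider "m = 0" | "m = 1" | k where "m = Suc (Suc k)" by (metis One_nat_def not0_implies_Suc)
    then show ?case
    proof cases
      case 1
      then have "set (filter (\<lambda>x. x \<le> m) e) = {}" using canonD(2)[OF cm] by simp
      then have "filter (\<lambda>x. x \<le> m) e = []" by (simp only: set_empty)
      then show ?thesis using 1 by simp
    next
      case 2
      then have "set (filter (\<lambda>x. x \<le> m) e) = {1}" using canonD(2)[OF cm] by simp
      moreover have "length (filter (\<lambda>x. x \<le> m) e) = 1"
        using distinct_card[OF canonD(1)[OF cm]] calculation by simp
      ultimately have "filter (\<lambda>x. x \<le> m) e = [1]"
        by (cases "filter (\<lambda>x. x \<le> m) e") auto
      then show ?thesis using 2 by (simp add: lev_def)
    next
      case 3
      have IH: "map (lev U) (filter (\<lambda>x. x \<le> Suc k) e) = q_step n U (Suc k)"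
        using less.IH[of "Suc k"] less.prems 3 by simp
      have "filter (\<lambda>x. x \<le> Suc k) (filter (\<lambda>x. x \<le> m) e) = filter (\<lambda>x. x \<le> Suc k) e"
        using 3 by (simp add: filter_filter) (metis le_SucI)
      then show ?thesis using UQ_step[of k "filter (\<lambda>x. x \<le> m) e"] cm 3 less.prems IH by simp
    qed
  qed
  moreover have "filter (\<lambda>x. x \<le> n) e = e" using canonD(2)[OF c] by (intro filter_True) auto
  ultimately show ?thesis unfolding qU_def by (metis order_refl)
qed

end

context NU
begin

lemma EX_step:
  assumes c: "canon (Suc k) U E" and kn: "Suc (Suc k) \<le> n"
  defines "p \<equiv> ipt n U (Suc (Suc k)) (map (lev U) E)"
  shows "canon (Suc (Suc k)) U (take p E @ [Suc (Suc k)] @ drop p E)"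
proof -
  let ?i = "Suc (Suc k)"
  let ?l = "lev U ?i"
  define W where "W = map (lev U) E"
  define xs where "xs = take p E"
  define ys where "ys = drop p E"
  have E: "E = xs @ ys" unfolding xs_def ys_def by simp
  have dE: "distinct E" using canonD(1)[OF c] .
  have sE: "set E = {1..Suc k}" using canonD(2)[OF c] .
  have iE: "?i \<notin> set E" using sE by simp
  have lenW: "length W = length E" using W_def by simp
  have Elt: "\<forall>y\<in>set E. lev U y \<le> ?l" using sE kn lev_mono by auto
  have Wle: "\<forall>v\<in>set W. v \<le> ?l" using Elt W_def by auto
  have stW: "stp W" using canonD(4)[OF c] W_def by simp
  have Ene: "E \<noteq> []" using sE by auto
  have dN: "distinct (xs @ [?i] @ ys)" using dE iE E by auto
  have sN: "set (xs @ [?i] @ ys) = {1..?i}" using sE E by auto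
  have mapx: "map (lev U) xs = take p W" "map (lev U) ys = drop p W"
    unfolding xs_def ys_def W_def by (simp_all add: take_map drop_map)
  show ?thesis
  proof (cases "?l = 0")
    case True
    then have all0: "\<forall>v\<in>set W. v = 0" using Wle by simp
    then have pW: "p = length W" using ipt_zero[OF True] p_def W_def by simp
    then have ys0: "ys = []" using ys_def lenW by simp
    then have xsE: "xs = E" using E by simp
    show ?thesis unfolding xs_def[symmetric] ys_def[symmetric] canon_def
    proof (intro conjI)
      show "distinct (xs @ [?i] @ ys)" by (rule dN)
      show "set (xs @ [?i] @ ys) = {1..?i}" by (rule sN)
      show "xs @ [?i] @ ys \<noteq> [] \<longrightarrow> lev U (hd (xs @ [?i] @ ys)) = 0"
        using canonD(3)[OF c] Ene xsE by simp
      show "stp (map (lev U) (xs @ [?i] @ ys))"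
        using stW Ene xsE ys0 W_def True by (simp add: stp_append)
      show "\<forall>u v. bef (xs @ [?i] @ ys) u v \<longrightarrow> lev U u = lev U v \<longrightarrow> u < v"
      proof (intro allI impI)
        fix u v assume b: "bef (xs @ [?i] @ ys) u v" and lv: "lev U u = lev U v"
        then have "bef (xs @ ys) u v \<or> (u \<in> set xs \<and> v = ?i) \<or> (u = ?i \<and> v \<in> set ys)"
          by (simp only: bef3)
        then show "u < v"
        proof (elim disjE conjE)
          assume "bef (xs @ ys) u v" then show ?thesis using canonD(5)[OF c] E lv by simp
        next
          assume "u \<in> set xs" "v = ?i" then show ?thesis using sE xsE by auto
        next
          assume "u = ?i" "v \<in> set ys" then show ?thesis using ys0 by simp
        qed
      qed
      show "\<forall>u\<in>set (xs @ [?i] @ ys). \<forall>v\<in>set (xs @ [?i] @ ys). lev U v = Suc (lev U u) \<longrightarrow> ((u, v) \<in> U \<longleftrightarrow> bef (xs @ [?i] @ ys) u v)"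
      proof (intro ballI impI)
        fix u v assume u: "u \<in> set (xs @ [?i] @ ys)" and v: "v \<in> set (xs @ [?i] @ ys)" and lv: "lev U v = Suc (lev U u)"
        have "lev U v = 0" using v Elt xsE ys0 True by auto
        then show "(u, v) \<in> U \<longleftrightarrow> bef (xs @ [?i] @ ys) u v" using lv by simp
      qed
    qed
  next
    case False
    then have l0: "0 < ?l" by simp
    define a where "a = ?l - 1"
    have la: "?l = Suc a" using l0 a_def by simp
    define C where "C = card (Pset ?i)"
    have PE: "Pset ?i \<subseteq> set E"
    proof
      fix y assume "y \<in> Pset ?i"
      then have "(y, ?i) \<in> U" unfolding Pset_def by blast
      then have "y < ?i" "1 \<le> y" using U_lt by auto
      then show "y \<in> set E" using sE by auto
    qed
    have Plev: "\<forall>y\<in>Pset ?i. lev U y = a" unfolding Pset_def using la by auto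
    have C1: "1 \<le> C" using Pset_pos l0 C_def by simp
    have cW: "cnt a W = card {y \<in> set E. lev U y = a}" using cnt_map_distinct[OF dE, of a "lev U"] W_def by simp
    have "Pset ?i \<subseteq> {y \<in> set E. lev U y = a}" using PE Plev by auto
    then have C2: "C \<le> cnt a W" using cW C_def by (simp add: card_mono)
    have pdef: "p = rp (after_occ a C W) (Suc a) W"
      using ipt_pos[OF l0] a_def p_def W_def C_def by simp
    have K: "1 \<le> p" "p \<le> length W" "cnt a (take p W) = C" "W ! (p - 1) \<in> {a, Suc a}"
      "p < length W \<longrightarrow> W ! p \<noteq> Suc a"
      using K1[OF C1 C2] pdef by auto
    have dx: "distinct xs" using dE E by simp
    have xys: "set xs \<inter> set ys = {}" using dE E by simp
    have Px: "{y \<in> set xs. lev U y = a} = Pset ?i"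
    proof (rule downclosed_eq)
      show "finite {y \<in> set E. lev U y = a}" by simp
      show "{y \<in> set xs. lev U y = a} \<subseteq> {y \<in> set E. lev U y = a}" using E by auto
      show "Pset ?i \<subseteq> {y \<in> set E. lev U y = a}" using PE Plev by auto
      show "\<forall>y\<in>{y \<in> set E. lev U y = a}. \<forall>z\<in>{y \<in> set xs. lev U y = a}. y < z \<longrightarrow> y \<in> {y \<in> set xs. lev U y = a}"
      proof (intro ballI impI)
        fix y z assume y: "y \<in> {y \<in> set E. lev U y = a}" and z: "z \<in> {y \<in> set xs. lev U y = a}" and yz: "y < z"
        have zE: "z \<in> set E" using z E by auto
        have "\<not> bef E z y"
        proof
          assume "bef E z y"
          then have "z < y" using canonD(5)[OF c] y z by auto
          then show False using yz by simp
        qed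
        moreover have "y \<noteq> z" using yz by simp
        ultimately have "bef E y z" using bef_total[of y E z] y zE by auto
        then have "bef xs y z \<or> bef ys y z \<or> (y \<in> set xs \<and> z \<in> set ys)" using E bef_append by simp
        moreover have "z \<notin> set ys" using z xys by auto
        ultimately have "y \<in> set xs" using bef_set by blast
        then show "y \<in> {y \<in> set xs. lev U y = a}" using y by simp
      qed
      show "\<forall>y\<in>{y \<in> set E. lev U y = a}. \<forall>z\<in>Pset ?i. y < z \<longrightarrow> y \<in> Pset ?i"
      proof (intro ballI impI)
        fix y z assume y: "y \<in> {y \<in> set E. lev U y = a}" and z: "z \<in> Pset ?i" and yz: "y < z"
        have "1 \<le> y" using y sE by auto
        moreover have "(z, ?i) \<in> U" using z unfolding Pset_def by blast
        ultimately have "(y, ?i) \<in> U" using pred_down yz by simp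
        then show "y \<in> Pset ?i" unfolding Pset_def using y la by simp
      qed
      have "card {y \<in> set xs. lev U y = a} = cnt a (map (lev U) xs)"
        using cnt_map_distinct[OF dx, of a "lev U"] by simp
      then show "card {y \<in> set xs. lev U y = a} = card (Pset ?i)" using mapx K(3) C_def by simp
    qed
    have allx: "\<forall>j\<in>set E. lev U j = ?l \<longrightarrow> j \<in> set xs"
    proof (intro ballI impI)
      fix j assume jE: "j \<in> set E" and lj: "lev U j = ?l"
      show "j \<in> set xs"
      proof (rule ccontr)
        assume "j \<notin> set xs"
        then have jy: "j \<in> set ys" using jE E by auto
        then obtain t where t: "t < length ys" "ys ! t = j" by (metis in_set_conv_nth)
        define zs where "zs = map (lev U) ys"
        have zsd: "zs = drop p W" using mapx zs_def by simp
        have pl: "p < length W" using t lenW ys_def by simp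
        have "W ! p \<le> Suc a" using Wle pl la by simp
        then have z0: "zs ! 0 \<le> a" using K(5) pl zsd by simp
        have zt: "a < zs ! t" using t lj la zs_def by simp
        have stz: "stp zs" using stp_drop[OF stW] zsd by simp
        obtain s where s: "s < t" "zs ! s = a" using stp_ivt[OF stz _ z0 zt] t zs_def by auto
        define k0 where "k0 = ys ! s"
        have k0y: "k0 \<in> set ys" using s t k0_def by simp
        have lk0: "lev U k0 = a" using s t k0_def zs_def by simp
        have dy: "distinct ys" using dE E by simp
        have "bef ys k0 j" using bef_nth[OF dy, of s t] s t k0_def by simp
        then have "bef E k0 j" using E bef_append by simp
        moreover have "k0 \<in> set E" using k0y E by simp
        ultimately have k0j: "(k0, j) \<in> U" using canonD(6)[OF c _ jE] lk0 lj la by simp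
        have "j < ?i" using jE sE by auto
        have sub: "insert k0 (Pset ?i) \<subseteq> Pset ?i"
        proof
          fix y assume "y \<in> insert k0 (Pset ?i)"
          then have yy: "(y, j) \<in> U \<and> lev U y = a"
          proof
            assume "y = k0" then show ?thesis using k0j lk0 by simp
          next
            assume yP: "y \<in> Pset ?i"
            then have "y \<in> set xs" "lev U y = a" using Px by auto
            then have "bef E y j" using E jy bef_append by simp
            moreover have "y \<in> set E" using \<open>y \<in> set xs\<close> E by simp
            ultimately have "(y, j) \<in> U" using canonD(6)[OF c _ jE] \<open>lev U y = a\<close> lj la by simp
            then show ?thesis using \<open>lev U y = a\<close> by simp
          qed
          then have "(y, ?i) \<in> U" using pred_mono[of y j ?i] \<open>j < ?i\<close> kn by simp
          then show "y \<in> Pset ?i" unfolding Pset_def using yy la by simp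
        qed
        have "k0 \<notin> Pset ?i" using Px k0y xys by auto
        then have "card (insert k0 (Pset ?i)) = Suc (card (Pset ?i))" using Pset_fin by simp
        moreover have "card (insert k0 (Pset ?i)) \<le> card (Pset ?i)" using card_mono[OF Pset_fin sub] .
        ultimately show False by simp
      qed
    qed
    have xne: "xs \<noteq> []" using K(1) K(2) lenW xs_def by auto
    show ?thesis unfolding xs_def[symmetric] ys_def[symmetric] canon_def
    proof (intro conjI)
      show "distinct (xs @ [?i] @ ys)" by (rule dN)
      show "set (xs @ [?i] @ ys) = {1..?i}" by (rule sN)
      show "xs @ [?i] @ ys \<noteq> [] \<longrightarrow> lev U (hd (xs @ [?i] @ ys)) = 0"
        using canonD(3)[OF c] Ene xne E by simp
      show "stp (map (lev U) (xs @ [?i] @ ys))"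
      proof -
        have s1: "stp (map (lev U) xs)" "stp (map (lev U) ys)" using stW mapx by (simp_all add: stp_take stp_drop)
        have tne: "take p W \<noteq> []" using K(1) K(2) by auto
        have "last (take p W) = take p W ! (length (take p W) - 1)" using tne by (rule last_conv_nth)
        also have "\<dots> = W ! (p - 1)" using K(1) K(2) by (simp add: min_absorb2)
        finally have lastx: "last (map (lev U) xs) = W ! (p - 1)" using mapx by simp
        have j1: "?l \<le> last (map (lev U) xs) + 1" using lastx K(4) la by auto
        have j2: "ys \<noteq> [] \<Longrightarrow> hd (map (lev U) ys) \<le> ?l + 1"
        proof -
          assume "ys \<noteq> []"
          then have "hd ys \<in> set E" using E by simp
          then have "lev U (hd ys) \<le> ?l" using Elt by blast
          then show ?thesis using \<open>ys \<noteq> []\<close> by (simp add: hd_map)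
        qed
        show ?thesis using s1 j1 j2 xne by (simp add: stp_append stp_Cons)
      qed
      show "\<forall>u v. bef (xs @ [?i] @ ys) u v \<longrightarrow> lev U u = lev U v \<longrightarrow> u < v"
      proof (intro allI impI)
        fix u v assume b: "bef (xs @ [?i] @ ys) u v" and lv: "lev U u = lev U v"
        then have "bef (xs @ ys) u v \<or> (u \<in> set xs \<and> v = ?i) \<or> (u = ?i \<and> v \<in> set ys)"
          by (simp only: bef3)
        then show "u < v"
        proof (elim disjE conjE)
          assume "bef (xs @ ys) u v" then show ?thesis using canonD(5)[OF c] E lv by simp
        next
          assume "u \<in> set xs" "v = ?i"
          then have "u \<in> set E" using E by simp
          then have "u \<le> Suc k" using sE by simp
          then show ?thesis using \<open>v = ?i\<close> by simp
        next
          assume "u = ?i" "v \<in> set ys"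
          then have "v \<in> set xs" using allx lv E by auto
          then show ?thesis using \<open>v \<in> set ys\<close> xys by auto
        qed
      qed
      show "\<forall>u\<in>set (xs @ [?i] @ ys). \<forall>v\<in>set (xs @ [?i] @ ys). lev U v = Suc (lev U u) \<longrightarrow> ((u, v) \<in> U \<longleftrightarrow> bef (xs @ [?i] @ ys) u v)"
      proof (intro ballI impI)
        fix u v assume u: "u \<in> set (xs @ [?i] @ ys)" and v: "v \<in> set (xs @ [?i] @ ys)" and lv: "lev U v = Suc (lev U u)"
        have B: "bef (xs @ [?i] @ ys) u v \<longleftrightarrow> bef (xs @ ys) u v \<or> (u \<in> set xs \<and> v = ?i) \<or> (u = ?i \<and> v \<in> set ys)"
          by (rule bef3)
        show "(u, v) \<in> U \<longleftrightarrow> bef (xs @ [?i] @ ys) u v"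
        proof (cases "u = ?i")
          case True
          then have "v \<noteq> ?i" using lv by auto
          then have "v \<in> set E" using v E by auto
          then show ?thesis using Elt lv True by fastforce
        next
          case uF: False
          then have uE: "u \<in> set E" using u E by auto
          show ?thesis
          proof (cases "v = ?i")
            case True
            have "(u, ?i) \<in> U \<longleftrightarrow> u \<in> Pset ?i" unfolding Pset_def using lv True by auto
            also have "\<dots> \<longleftrightarrow> u \<in> set xs" using Px lv True la by auto
            also have "\<dots> \<longleftrightarrow> bef (xs @ [?i] @ ys) u v"
            proof -
              have "\<not> bef (xs @ ys) u ?i" using bef_set iE E by metis
              then show ?thesis using B True uF by simp
            qed
            finally show ?thesis using True by simp
          next
            case False
            then have vE: "v \<in> set E" using v E by auto
            have "(u, v) \<in> U \<longleftrightarrow> bef E u v" using canonD(6)[OF c uE vE lv] .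
            then show ?thesis using B uF False E by simp
          qed
        qed
      qed
    qed
  qed
qed

lemma EX_canon: "m \<le> n \<Longrightarrow> canon m U (exl n U m)"
proof (induction m rule: less_induct)
  case (less m)
  consider "m = 0" | "m = 1" | k where "m = Suc (Suc k)" by (metis One_nat_def not0_implies_Suc)
  then show ?case
  proof cases
    case 1 then show ?thesis by (simp add: canon_def)
  next
    case 2 then show ?thesis unfolding canon_def by (simp add: lev_def)
  next
    case 3
    have "canon (Suc k) U (exl n U (Suc k))" using less 3 by simp
    from EX_step[OF this] less.prems 3 show ?thesis by simp
  qed
qed

end

context NU
begin

definition up :: "nat \<Rightarrow> nat set" where
  "up i = {j \<in> {1..n}. (i, j) \<in> U}"

lemma up_char:
  assumes i: "i \<in> {1..n}" and j: "j \<in> {1..n}"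
  shows "(i, j) \<in> U \<longleftrightarrow> n < j + card (up i)"
proof (cases "up i = {}")
  case True
  then have "(i, j) \<notin> U" using j unfolding up_def by blast
  then show ?thesis using True j by simp
next
  case False
  have fin: "finite (up i)" unfolding up_def by simp
  define mn where "mn = Min (up i)"
  have mnin: "mn \<in> up i" using Min_in[OF fin False] mn_def by simp
  have T: "up i = {mn..n}"
  proof
    show "up i \<subseteq> {mn..n}" using Min_le[OF fin] mn_def unfolding up_def by auto
    show "{mn..n} \<subseteq> up i"
    proof
      fix t assume t: "t \<in> {mn..n}"
      have "(i, mn) \<in> U" "mn \<in> {1..n}" using mnin unfolding up_def by auto
      then have "(i, t) \<in> U" using pred_mono t by auto
      then show "t \<in> up i" using t \<open>mn \<in> {1..n}\<close> unfolding up_def by auto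
    qed
  qed
  have "mn \<le> n" "1 \<le> mn" using mnin unfolding up_def by auto
  have "(i, j) \<in> U \<longleftrightarrow> j \<in> up i" using j unfolding up_def by auto
  also have "\<dots> \<longleftrightarrow> mn \<le> j" using T j by auto
  also have "\<dots> \<longleftrightarrow> n < j + card (up i)" using T \<open>mn \<le> n\<close> j by auto
  finally show ?thesis .
qed

lemma up_mono: "1 \<le> i \<Longrightarrow> i \<le> i' \<Longrightarrow> i' \<le> n \<Longrightarrow> card (up i') \<le> card (up i)"
proof -
  assume h: "1 \<le> i" "i \<le> i'" "i' \<le> n"
  have "up i' \<subseteq> up i"
  proof
    fix j assume "j \<in> up i'"
    then have j: "j \<in> {1..n}" "(i', j) \<in> U" unfolding up_def by auto
    then have "x i' + 1 < x j" using U_iff by auto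
    moreover have "x i \<le> x i'" using mono h by simp
    ultimately have "(i, j) \<in> U" using U_iff h j by auto
    then show "j \<in> up i" using j unfolding up_def by auto
  qed
  then show ?thesis by (intro card_mono) (auto simp: up_def)
qed

end

lemma uio_NU: "R \<in> unit_interval_orders n \<Longrightarrow> \<exists>x. NU n R x"
proof -
  assume "R \<in> unit_interval_orders n"
  then have "\<exists>x::nat \<Rightarrow> real. (\<forall>i j. 1 \<le> i \<longrightarrow> i \<le> j \<longrightarrow> j \<le> n \<longrightarrow> x i \<le> x j) \<and>
       R = {(i, j). i \<in> {1..n} \<and> j \<in> {1..n} \<and> x i + 1 < x j}"
    unfolding unit_interval_orders_def by (simp only: mem_Collect_eq)
  then obtain x :: "nat \<Rightarrow> real" where H: "(\<forall>i j. 1 \<le> i \<longrightarrow> i \<le> j \<longrightarrow> j \<le> n \<longrightarrow> x i \<le> x j) \<and>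
       R = {(i, j). i \<in> {1..n} \<and> j \<in> {1..n} \<and> x i + 1 < x j}" by (rule exE)
  note m = conjunct1[OF H]
  note e = conjunct2[OF H]
  have "NU n R x"
  proof
    show "\<And>i j. 1 \<le> i \<Longrightarrow> i \<le> j \<Longrightarrow> j \<le> n \<Longrightarrow> x i \<le> x j" using m by blast
    show "R = {(i, j). i \<in> {1..n} \<and> j \<in> {1..n} \<and> x i + 1 < x j}" by (rule e)
  qed
  then show ?thesis by blast
qed

lemma NU_uio: "NU n R x \<Longrightarrow> R \<in> unit_interval_orders n"
proof -
  assume h: "NU n R x"
  have "(\<forall>i j. 1 \<le> i \<longrightarrow> i \<le> j \<longrightarrow> j \<le> n \<longrightarrow> x i \<le> x j) \<and>
           R = {(i, j). i \<in> {1..n} \<and> j \<in> {1..n} \<and> x i + 1 < x j}"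
    using NU.mono[OF h] NU.U_eq[OF h] by blast
  then show ?thesis unfolding unit_interval_orders_def by (intro CollectI exI[of _ x])
qed

lemma uio_iso_eq:
  assumes R: "NU n R xr" and S: "NU n S xs" and iso: "poset_iso n R S"
  shows "R = S"
proof -
  obtain f where bf: "bij_betw f {1..n} {1..n}"
    and fr: "\<forall>i\<in>{1..n}. \<forall>j\<in>{1..n}. (i, j) \<in> R \<longleftrightarrow> (f i, f j) \<in> S"
    using iso unfolding poset_iso_def by blast
  let ?uR = "\<lambda>i. card (NU.up n R i)"
  let ?uS = "\<lambda>i. card (NU.up n S i)"
  have inj: "inj_on f {1..n}" using bij_betw_imp_inj_on[OF bf] .
  have fimg: "f ` {1..n} = {1..n}" using bij_betw_imp_surj_on[OF bf] .
  have fsurj: "\<exists>j\<in>{1..n}. j' = f j" if "j' \<in> {1..n}" for j'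
  proof -
    have "j' \<in> f ` {1..n}" using fimg that by simp
    then show ?thesis by blast
  qed
  have upR: "NU.up n R i = {j \<in> {1..n}. (i, j) \<in> R}" for i using NU.up_def[OF R] .
  have upS: "NU.up n S i = {j \<in> {1..n}. (i, j) \<in> S}" for i using NU.up_def[OF S] .
  have uf: "?uS (f i) = ?uR i" if i: "i \<in> {1..n}" for i
  proof -
    have "NU.up n S (f i) = f ` NU.up n R i"
    proof
      show "NU.up n S (f i) \<subseteq> f ` NU.up n R i"
      proof
        fix j' assume "j' \<in> NU.up n S (f i)"
        then have j': "j' \<in> {1..n}" "(f i, j') \<in> S" using upS by auto
        then obtain j where j: "j \<in> {1..n}" "j' = f j" using fsurj by blast
        then have "(i, j) \<in> R" using fr i j' by auto
        then show "j' \<in> f ` NU.up n R i" using j upR by auto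
      qed
      show "f ` NU.up n R i \<subseteq> NU.up n S (f i)"
      proof
        fix j' assume "j' \<in> f ` NU.up n R i"
        then obtain j where j: "j \<in> {1..n}" "(i, j) \<in> R" "j' = f j" using upR by auto
        then have "(f i, j') \<in> S" using fr i by auto
        moreover have "j' \<in> {1..n}" using j fimg by auto
        ultimately show "j' \<in> NU.up n S (f i)" using upS by auto
      qed
    qed
    moreover have "inj_on f (NU.up n R i)" using inj by (rule inj_on_subset) (auto simp: upR)
    ultimately show ?thesis by (simp add: card_image)
  qed
  have ueq: "?uR i = ?uS i" if i: "i \<in> {1..n}" for i
  proof -
    define DR where "DR t = {i \<in> {1..n}. t \<le> ?uR i}" for t
    define DS where "DS t = {i \<in> {1..n}. t \<le> ?uS i}" for t
    have D: "DR t = DS t" for t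
    proof (rule downclosed_eq[of "{1..n}"])
      show "finite {1..n}" by simp
      show "DR t \<subseteq> {1..n}" "DS t \<subseteq> {1..n}" unfolding DR_def DS_def by auto
      show "\<forall>y\<in>{1..n}. \<forall>z\<in>DR t. y < z \<longrightarrow> y \<in> DR t"
        unfolding DR_def using NU.up_mono[OF R] by (auto intro: le_trans)
      show "\<forall>y\<in>{1..n}. \<forall>z\<in>DS t. y < z \<longrightarrow> y \<in> DS t"
        unfolding DS_def using NU.up_mono[OF S] by (auto intro: le_trans)
      have "f ` DR t = DS t"
      proof
        show "f ` DR t \<subseteq> DS t" unfolding DR_def DS_def using uf fimg by auto
        show "DS t \<subseteq> f ` DR t"
        proof
          fix i' assume "i' \<in> DS t"
          then have i': "i' \<in> {1..n}" "t \<le> ?uS i'" unfolding DS_def by auto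
          then obtain i where "i \<in> {1..n}" "i' = f i" using fsurj by blast
          then show "i' \<in> f ` DR t" unfolding DR_def using uf i' by auto
        qed
      qed
      moreover have "inj_on f (DR t)" using inj unfolding DR_def by (rule inj_on_subset) auto
      ultimately show "card (DR t) = card (DS t)" using card_image by metis
    qed
    have "i \<in> DR (?uR i)" "i \<in> DS (?uS i)" unfolding DR_def DS_def using i by auto
    then have "?uR i \<le> ?uS i" "?uS i \<le> ?uR i" using D unfolding DR_def DS_def by blast+
    then show ?thesis by simp
  qed
  show "R = S"
  proof (rule set_eqI)
    fix p :: "nat \<times> nat"
    obtain i j where p: "p = (i, j)" by (cases p)
    show "p \<in> R \<longleftrightarrow> p \<in> S"
    proof (cases "i \<in> {1..n} \<and> j \<in> {1..n}")
      case True
      then show ?thesis using NU.up_char[OF R, of i j] NU.up_char[OF S, of i j] ueq p by auto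
    next
      case False
      then have "(i, j) \<notin> R" "(i, j) \<notin> S" using NU.U_lt[OF R] NU.U_lt[OF S] by force+
      then show ?thesis using p by simp
    qed
  qed
qed

lemma key_arith:
  fixes a b p q N :: nat
  assumes "1 \<le> p" "p < N" "1 \<le> q" "q < N"
  shows "a * N + p + N < b * N + q \<longleftrightarrow> (int b - int a \<ge> 2 \<or> (int b - int a = 1 \<and> p < q))"
proof (cases "a + 2 \<le> b")
  case True
  then obtain d where d: "b = a + 2 + d" by (metis le_add_diff_inverse)
  have "a * N + p + N < b * N + q"
    using assms by (simp add: d algebra_simps)
  then show ?thesis using True by simp
next
  case False
  show ?thesis
  proof (cases "b = a + 1")
    case True
    then show ?thesis using assms by (simp add: algebra_simps)
  next
    case False2: False
    then have "b \<le> a" using False by simp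
    then have "b * N \<le> a * N" by (simp add: mult_le_mono1)
    then have "\<not> a * N + p + N < b * N + q" using assms by linarith
    moreover have "\<not> (int b - int a \<ge> 2 \<or> (int b - int a = 1 \<and> p < q))" using \<open>b \<le> a\<close> by simp
    ultimately show ?thesis by simp
  qed
qed

lemma div_iff: "(N::real) > 0 \<Longrightarrow> a / N + 1 < b / N \<longleftrightarrow> a + N < b"
proof -
  assume N: "N > 0"
  have "a / N + 1 = (a + N) / N" using N by (simp add: field_simps)
  then show ?thesis using N by (simp add: divide_less_cancel)
qed

context NU
begin

lemma area_ivt:
  assumes "area_seq n w" "1 \<le> p" "p \<le> n" "0 < w ! (p - 1)"
  shows "\<exists>q. 1 \<le> q \<and> q < p \<and> w ! (q - 1) = w ! (p - 1) - 1"
proof -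
  have st: "stp w" "length w = n" "w \<noteq> [] \<longrightarrow> hd w = 0" using assms(1) unfolding area_seq_stp by auto
  have "w ! 0 = 0" using st assms by (auto simp: hd_conv_nth)
  have a1: "p - 1 < length w" using assms st by simp
  have a2: "w ! 0 \<le> w ! (p - 1) - 1" using \<open>w ! 0 = 0\<close> by simp
  have a3: "w ! (p - 1) - 1 < w ! (p - 1)" using assms(4) by simp
  obtain s where "s < p - 1" "w ! s = w ! (p - 1) - 1"
    using stp_ivt[OF st(1) a1 a2 a3] by blast
  then show ?thesis by (intro exI[of _ "Suc s"]) auto
qed

lemma V_canon:
  assumes aw: "area_seq n w" and iso: "poset_iso n (Pw w) U"
  shows "\<exists>e. canon n U e \<and> map (lev U) e = w"
proof -
  have lw: "length w = n" using aw unfolding area_seq_def by simp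
  define key where "key p = w ! (p - 1) * (n + 1) + p" for p
  define lab where "lab p = Suc (card {q \<in> {1..n}. key q < key p})" for p
  have key_inj: "p = q" if "p \<in> {1..n}" "q \<in> {1..n}" "key p = key q" for p q
  proof -
    have "key p mod (n + 1) = p mod (n + 1)" "key q mod (n + 1) = q mod (n + 1)"
      unfolding key_def by (simp only: mod_mult_self3)+
    moreover have "p mod (n + 1) = p" "q mod (n + 1) = q" using that by auto
    ultimately have "key p mod (n + 1) = p" "key q mod (n + 1) = q" by simp_all
    then show ?thesis using that by metis
  qed
  have lab_lt: "lab p < lab q" if "p \<in> {1..n}" "q \<in> {1..n}" "key p < key q" for p q
  proof -
    have "{r \<in> {1..n}. key r < key p} \<subset> {r \<in> {1..n}. key r < key q}"
      using that by auto
    then have "card {r \<in> {1..n}. key r < key p} < card {r \<in> {1..n}. key r < key q}"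
      by (intro psubset_card_mono) auto
    then show ?thesis unfolding lab_def by simp
  qed
  have lab_iff: "lab p < lab q \<longleftrightarrow> key p < key q" if "p \<in> {1..n}" "q \<in> {1..n}" for p q
  proof
    assume "lab p < lab q"
    show "key p < key q"
    proof (rule ccontr)
      assume "\<not> key p < key q"
      then consider "key p = key q" | "key q < key p" by linarith
      then show False
      proof cases
        case 1 then have "p = q" using key_inj that by blast
        then show False using \<open>lab p < lab q\<close> by simp
      next
        case 2 then have "lab q < lab p" using lab_lt that by blast
        then show False using \<open>lab p < lab q\<close> by simp
      qed
    qed
  qed (use lab_lt that in blast)
  have lab_inj: "inj_on lab {1..n}"
  proof (rule inj_onI)
    fix p q assume pq: "p \<in> {1..n}" "q \<in> {1..n}" "lab p = lab q"
    then have "\<not> key p < key q" "\<not> key q < key p" using lab_iff by (metis less_irrefl)+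
    then show "p = q" using key_inj pq by (metis linorder_neqE_nat)
  qed
  have lab_rng: "lab p \<in> {1..n}" if "p \<in> {1..n}" for p
  proof -
    have "{r \<in> {1..n}. key r < key p} \<subseteq> {1..n} - {p}" by auto
    then have "card {r \<in> {1..n}. key r < key p} \<le> card ({1..n} - {p})" by (intro card_mono) auto
    also have "\<dots> = n - 1" using that by simp
    finally show ?thesis using that unfolding lab_def by auto
  qed
  have lab_img: "lab ` {1..n} = {1..n}"
  proof -
    have "lab ` {1..n} \<subseteq> {1..n}" using lab_rng by auto
    moreover have "card (lab ` {1..n}) = card {1..n}" using card_image[OF lab_inj] .
    ultimately show ?thesis by (intro card_subset_eq) auto
  qed
  have lab_bij: "bij_betw lab {1..n} {1..n}" unfolding bij_betw_def using lab_inj lab_img by simp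
  define sg where "sg = inv_into {1..n} lab"
  have sg1: "sg i \<in> {1..n}" "lab (sg i) = i" if "i \<in> {1..n}" for i
    using that lab_img lab_inj unfolding sg_def
    by (metis bij_betw_inv_into_right bij_betwE bij_betw_inv_into lab_bij)+
  define y where "y i = real (key (sg i)) / real (n + 1)" for i
  define V where "V = {(i, j). i \<in> {1..n} \<and> j \<in> {1..n} \<and> y i + 1 < y j}"
  have NV: "NU n V y"
  proof
    show "y i \<le> y j" if "1 \<le> i" "i \<le> j" "j \<le> n" for i j
    proof -
      have ij: "i \<in> {1..n}" "j \<in> {1..n}" using that by auto
      have "\<not> key (sg j) < key (sg i)"
      proof
        assume "key (sg j) < key (sg i)"
        then have "lab (sg j) < lab (sg i)" using lab_iff sg1 ij by blast
        then show False using sg1 ij that by simp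
      qed
      then have "key (sg i) \<le> key (sg j)" by simp
      then show ?thesis unfolding y_def by (simp add: divide_right_mono)
    qed
    show "V = {(i, j). i \<in> {1..n} \<and> j \<in> {1..n} \<and> y i + 1 < y j}" by (rule V_def)
  qed
  have PwV: "(p, q) \<in> Pw w \<longleftrightarrow> (lab p, lab q) \<in> V" if pq: "p \<in> {1..n}" "q \<in> {1..n}" for p q
  proof -
    have s: "sg (lab p) = p" "sg (lab q) = q" unfolding sg_def using inv_into_f_f[OF lab_inj] pq by auto
    have "(lab p, lab q) \<in> V \<longleftrightarrow> real (key p) / real (n + 1) + 1 < real (key q) / real (n + 1)"
      unfolding V_def y_def using s lab_rng pq by auto
    also have "\<dots> \<longleftrightarrow> real (key p) + real (n + 1) < real (key q)"
      by (rule div_iff) simp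
    also have "\<dots> \<longleftrightarrow> key p + (n + 1) < key q" by linarith
    also have "\<dots> \<longleftrightarrow> w ! (p - 1) * (n + 1) + p + (n + 1) < w ! (q - 1) * (n + 1) + q"
      unfolding key_def by simp
    also have "\<dots> \<longleftrightarrow> (int (w ! (q - 1)) - int (w ! (p - 1)) \<ge> 2 \<or> (int (w ! (q - 1)) - int (w ! (p - 1)) = 1 \<and> p < q))"
      using key_arith[of p "n + 1" q "w ! (p - 1)" "w ! (q - 1)"] pq by auto
    also have "\<dots> \<longleftrightarrow> (p, q) \<in> Pw w" unfolding Pw_def using pq lw by auto
    finally show ?thesis by simp
  qed
  have isoV: "poset_iso n V U"
  proof -
    obtain f where bf: "bij_betw f {1..n} {1..n}"
      and fr: "\<forall>i\<in>{1..n}. \<forall>j\<in>{1..n}. (i, j) \<in> Pw w \<longleftrightarrow> (f i, f j) \<in> U"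
      using iso unfolding poset_iso_def by blast
    have bh: "bij_betw (f \<circ> sg) {1..n} {1..n}"
      unfolding sg_def using bij_betw_trans[OF bij_betw_inv_into[OF lab_bij] bf] by simp
    have "(i, j) \<in> V \<longleftrightarrow> ((f \<circ> sg) i, (f \<circ> sg) j) \<in> U" if "i \<in> {1..n}" "j \<in> {1..n}" for i j
      using PwV[of "sg i" "sg j"] fr sg1 that by auto
    then show ?thesis unfolding poset_iso_def using bh by blast
  qed
  have VU: "V = U" using uio_iso_eq[OF NV _ isoV] NU_axioms by blast
  have levw: "\<forall>p\<in>{1..n}. lab p = j \<longrightarrow> lev U j = w ! (p - 1)" for j
  proof (induction j rule: less_induct)
    case (less j)
    show ?case
    proof (intro ballI impI)
      fix p assume p: "p \<in> {1..n}" and lp: "lab p = j"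
      have j1: "1 \<le> j" using lab_rng p lp by force
      have S: "{Suc (lev U i) | i. (i, j) \<in> U} = {Suc (w ! (q - 1)) | q. q \<in> {1..n} \<and> (q, p) \<in> Pw w}"
      proof
        show "{Suc (lev U i) | i. (i, j) \<in> U} \<subseteq> {Suc (w ! (q - 1)) | q. q \<in> {1..n} \<and> (q, p) \<in> Pw w}"
        proof
          fix t assume "t \<in> {Suc (lev U i) | i. (i, j) \<in> U}"
          then obtain i where i: "t = Suc (lev U i)" "(i, j) \<in> U" by blast
          then have ij0: "i < j" "1 \<le> i" "j \<le> n" using U_lt by auto
          then have ij: "i < j" "i \<in> {1..n}" "j \<in> {1..n}" by auto
          have q: "sg i \<in> {1..n}" "lab (sg i) = i" using sg1 ij by auto
          have "(sg i, p) \<in> Pw w" using PwV[OF q(1) p] q lp i VU by simp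
          moreover have "lev U i = w ! (sg i - 1)" using less.IH[OF ij(1)] q by blast
          ultimately show "t \<in> {Suc (w ! (q - 1)) | q. q \<in> {1..n} \<and> (q, p) \<in> Pw w}" using i q by blast
        qed
        show "{Suc (w ! (q - 1)) | q. q \<in> {1..n} \<and> (q, p) \<in> Pw w} \<subseteq> {Suc (lev U i) | i. (i, j) \<in> U}"
        proof
          fix t assume "t \<in> {Suc (w ! (q - 1)) | q. q \<in> {1..n} \<and> (q, p) \<in> Pw w}"
          then obtain q where q: "t = Suc (w ! (q - 1))" "q \<in> {1..n}" "(q, p) \<in> Pw w" by blast
          then have "(lab q, j) \<in> U" using PwV[OF q(2) p] lp VU by simp
          then have "lab q < j" using U_lt by auto
          then have "lev U (lab q) = w ! (q - 1)" using less.IH q by blast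
          then show "t \<in> {Suc (lev U i) | i. (i, j) \<in> U}" using q \<open>(lab q, j) \<in> U\<close> by force
        qed
      qed
      have "Max (insert 0 {Suc (w ! (q - 1)) | q. q \<in> {1..n} \<and> (q, p) \<in> Pw w}) = w ! (p - 1)"
      proof (rule Max_eqI)
        show "finite (insert 0 {Suc (w ! (q - 1)) | q. q \<in> {1..n} \<and> (q, p) \<in> Pw w})"
          by (simp add: finite_image_set)
        show "t \<le> w ! (p - 1)" if "t \<in> insert 0 {Suc (w ! (q - 1)) | q. q \<in> {1..n} \<and> (q, p) \<in> Pw w}" for t
          using that unfolding Pw_def by auto
        show "w ! (p - 1) \<in> insert 0 {Suc (w ! (q - 1)) | q. q \<in> {1..n} \<and> (q, p) \<in> Pw w}"
        proof (cases "w ! (p - 1) = 0")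
          case True then show ?thesis by simp
        next
          case False
          then obtain q where q: "1 \<le> q" "q < p" "w ! (q - 1) = w ! (p - 1) - 1"
            using area_ivt[OF aw] p by fastforce
          then have "(q, p) \<in> Pw w" unfolding Pw_def using p lw False by auto
          moreover have "q \<in> {1..n}" using q p by auto
          ultimately show ?thesis using q False by force
        qed
      qed
      then show "lev U j = w ! (p - 1)" using lev_rec[OF j1] S by simp
    qed
  qed
  have levp: "lev U (lab p) = w ! (p - 1)" if "p \<in> {1..n}" for p
    using levw that by blast
  define e where "e = map lab [1..<n+1]"
  have le: "length e = n" unfolding e_def by simp
  have enth: "e ! k = lab (Suc k)" if "k < n" for k
  proof -
    have "k < length [1..<n+1]" using that by simp
    then have "e ! k = lab ([1..<n+1] ! k)" unfolding e_def by (rule nth_map)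
    also have "[1..<n+1] ! k = Suc k" using that by (subst nth_upt) auto
    finally show ?thesis by simp
  qed
  have su: "set [1..<n+1] = {1..n}" by (simp only: set_upt) auto
  have se: "set e = {1..n}" unfolding e_def set_map su using lab_img .
  have de: "distinct e" unfolding e_def distinct_map su using lab_inj by simp
  have me: "map (lev U) e = w"
  proof (rule nth_equalityI)
    show "length (map (lev U) e) = length w" using le lw by simp
    show "map (lev U) e ! k = w ! k" if "k < length (map (lev U) e)" for k
      using that le enth levp[of "Suc k"] by simp
  qed
  have befe: "bef e (lab p) (lab q) \<longleftrightarrow> p < q" if "p \<in> {1..n}" "q \<in> {1..n}" for p q
  proof -
    have i: "p - 1 < length e" "q - 1 < length e" using that le by auto
    have "e ! (p - 1) = lab p" "e ! (q - 1) = lab q" using enth[of "p - 1"] enth[of "q - 1"] that by auto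
    then have "bef e (lab p) (lab q) \<longleftrightarrow> p - 1 < q - 1" using bef_nth[OF de i] by simp
    also have "\<dots> \<longleftrightarrow> p < q" using that by auto
    finally show ?thesis .
  qed
  have ine: "\<exists>p\<in>{1..n}. u = lab p" if "u \<in> set e" for u
    using that se lab_img by (metis imageE)
  have "canon n U e"
    unfolding canon_def
  proof (intro conjI)
    show "distinct e" by (rule de)
    show "set e = {1..n}" by (rule se)
    show "e \<noteq> [] \<longrightarrow> lev U (hd e) = 0"
    proof
      assume "e \<noteq> []"
      then have "n > 0" using le by auto
      then have "hd e = lab 1" using enth[of 0] \<open>e \<noteq> []\<close> by (simp add: hd_conv_nth)
      then show "lev U (hd e) = 0" using levp[of 1] aw \<open>n > 0\<close> unfolding area_seq_def by simp
    qed
    show "stp (map (lev U) e)" using me aw unfolding area_seq_stp by simp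
    show "\<forall>u v. bef e u v \<longrightarrow> lev U u = lev U v \<longrightarrow> u < v"
    proof (intro allI impI)
      fix u v assume b: "bef e u v" and lv: "lev U u = lev U v"
      obtain p q where p: "p \<in> {1..n}" "u = lab p" and q: "q \<in> {1..n}" "v = lab q"
        using ine bef_set[OF b] by blast
      have "p < q" using befe p q b by simp
      moreover have "w ! (p - 1) = w ! (q - 1)" using lv levp p q by simp
      ultimately have "key p < key q" unfolding key_def by simp
      then show "u < v" using lab_lt p q by simp
    qed
    show "\<forall>u\<in>set e. \<forall>v\<in>set e. lev U v = Suc (lev U u) \<longrightarrow> ((u, v) \<in> U \<longleftrightarrow> bef e u v)"
    proof (intro ballI impI)
      fix u v assume u: "u \<in> set e" and v: "v \<in> set e" and lv: "lev U v = Suc (lev U u)"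
      obtain p q where p: "p \<in> {1..n}" "u = lab p" and q: "q \<in> {1..n}" "v = lab q"
        using ine u v by blast
      have wq: "w ! (q - 1) = Suc (w ! (p - 1))" using lv levp p q by simp
      have "(u, v) \<in> U \<longleftrightarrow> (p, q) \<in> Pw w" using PwV[OF p(1) q(1)] VU p q by simp
      also have "\<dots> \<longleftrightarrow> p < q" unfolding Pw_def using p q lw wq by auto
      also have "\<dots> \<longleftrightarrow> bef e u v" using befe p q by simp
      finally show "(u, v) \<in> U \<longleftrightarrow> bef e u v" .
    qed
  qed
  then show ?thesis using me by blast
qed

end

theorem mainTheorem6:
  fixes n :: nat and U :: "(nat \<times> nat) set"
  assumes "U \<in> unit_interval_orders n"
  shows "(\<exists>!w. area_seq n w \<and> poset_iso n (Pw w) U) \<and>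
         area_seq n (qU n U) \<and> poset_iso n (Pw (qU n U)) U"
proof -
  obtain x where N: "NU n U x" using uio_NU[OF assms] by blast
  have c: "canon n U (exl n U n)" using NU.EX_canon[OF N] by simp
  have q: "map (lev U) (exl n U n) = qU n U" using Ex_q unfolding qU_def by simp
  have A: "area_seq n (qU n U)" "poset_iso n (Pw (qU n U)) U"
    using NU.canon_iso[OF N c] q by auto
  have uniq: "w = qU n U" if h: "area_seq n w" "poset_iso n (Pw w) U" for w
  proof -
    obtain e where "canon n U e" "map (lev U) e = w" using NU.V_canon[OF N h] by blast
    then show ?thesis using NU.UQ[OF N] by simp
  qed
  show ?thesis using A uniq by blast
qed

end
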